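(* Let $f\colon[0,1]\times\mathbb R\to\mathbb R$ be continuous, and let $A,B\in\widehat{\Omega}[0,1]$ satisfy $\bigl|\int_0^1[A(s)-B(s)]\,ds\bigr|<1$. Then there exists $\lambda_0>0$ such that for every $\lambda\in\mathbb R$ with $|\lambda|\le\lambda_0$ the boundary value problem $x''(t)=-\lambda f(t,x(t))$, $t\in[0,1]$, $x(0)=\int_0^1A(s)\,dx(s)$, $x(1)=\int_0^1B(s)\,dx(s)$ has a solution.
   Context: Integrals in the boundary conditions are Riemann–Stieltjes integrals; a solution is a twice continuously differentiable $x\colon[0,1]\to\mathbb R$ satisfying the equation and the boundary conditions. For $\varepsilon>0$ and $a<b$, a bounded $A\colon[a,b]\to\mathbb R$ belongs to $\Omega_\varepsilon[a,b]$ if there exists $\delta>0$ such that $\sup_{t\le\tau\le\sigma\le s}|A(\sigma)-A(\tau)|\le\varepsilon$ whenever $t,s\in[a,b]$ and $0\le s-t\le\delta$. $\Omega[0,1]$ is the set of bounded $A\colon[0,1]\to\mathbb R$ such that for every $\varepsilon>0$ there is $a\in(0,1)$ with $A|_{[0,a]}\in\Omega_\varepsilon[0,a]$ and $A|_{[a,1]}$ of bounded (Jordan) variation on $[a,1]$. $\widehat{\Omega}[0,1]=\Omega[0,1]\cup C[0,1]\cup BV[0,1]$, where $BV[0,1]$ denotes functions of bounded variation on $[0,1]$. *)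

theory Defs
  imports "HOL-Analysis.Analysis"
begin

definition is_partition :: "real \<Rightarrow> real \<Rightarrow> nat \<Rightarrow> (nat \<Rightarrow> real) \<Rightarrow> bool" where
  "is_partition a b n t \<longleftrightarrow> t 0 = a \<and> t n = b \<and> (\<forall>i\<in>{1..n}. t (i - 1) < t i)"

definition bounded_variation_on :: "(real \<Rightarrow> real) \<Rightarrow> real \<Rightarrow> real \<Rightarrow> bool" where
  "bounded_variation_on A a b \<longleftrightarrow>
     (\<exists>M. \<forall>n t. is_partition a b n t \<longrightarrow>
        (\<Sum>i=1..n. \<bar>A (t i) - A (t (i - 1))\<bar>) \<le> M)"

definition has_RS_integral ::
  "(real \<Rightarrow> real) \<Rightarrow> (real \<Rightarrow> real) \<Rightarrow> real \<Rightarrow> real \<Rightarrow> real \<Rightarrow> bool" where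
  "has_RS_integral A g a b I \<longleftrightarrow>
     (\<forall>e>0. \<exists>d>0. \<forall>n t \<xi>. is_partition a b n t \<longrightarrow>
        (\<forall>i\<in>{1..n}. t i - t (i - 1) < d) \<longrightarrow>
        (\<forall>i\<in>{1..n}. t (i - 1) \<le> \<xi> i \<and> \<xi> i \<le> t i) \<longrightarrow>
        \<bar>(\<Sum>i=1..n. A (\<xi> i) * (g (t i) - g (t (i - 1)))) - I\<bar> < e)"

definition Omega_eps :: "real \<Rightarrow> real \<Rightarrow> real \<Rightarrow> (real \<Rightarrow> real) \<Rightarrow> bool" where
  "Omega_eps \<epsilon> a b A \<longleftrightarrow> bounded (A ` {a..b}) \<and>
     (\<exists>\<delta>>0. \<forall>t\<in>{a..b}. \<forall>s\<in>{a..b}. 0 \<le> s - t \<and> s - t \<le> \<delta> \<longrightarrow>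
        (\<forall>\<tau> \<sigma>. t \<le> \<tau> \<and> \<tau> \<le> \<sigma> \<and> \<sigma> \<le> s \<longrightarrow> \<bar>A \<sigma> - A \<tau>\<bar> \<le> \<epsilon>))"

definition Omega01 :: "(real \<Rightarrow> real) \<Rightarrow> bool" where
  "Omega01 A \<longleftrightarrow> bounded (A ` {0..1}) \<and>
     (\<forall>\<epsilon>>0. \<exists>a. 0 < a \<and> a < 1 \<and> Omega_eps \<epsilon> 0 a A \<and> bounded_variation_on A a 1)"

definition Omega_hat01 :: "(real \<Rightarrow> real) \<Rightarrow> bool" where
  "Omega_hat01 A \<longleftrightarrow> Omega01 A \<or> continuous_on {0..1} A \<or> bounded_variation_on A 0 1"

definition is_solution ::
  "(real \<Rightarrow> real \<Rightarrow> real) \<Rightarrow> real \<Rightarrow> (real \<Rightarrow> real) \<Rightarrow> (real \<Rightarrow> real) \<Rightarrow> (real \<Rightarrow> real) \<Rightarrow> bool" where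
  "is_solution f lam A B x \<longleftrightarrow>
     (\<exists>x' x''.
        (\<forall>t\<in>{0..1}. (x has_real_derivative x' t) (at t within {0..1})) \<and>
        (\<forall>t\<in>{0..1}. (x' has_real_derivative x'' t) (at t within {0..1})) \<and>
        continuous_on {0..1} x'' \<and>
        (\<forall>t\<in>{0..1}. x'' t = - lam * f t (x t))) \<and>
     has_RS_integral A x 0 1 (x 0) \<and>
     has_RS_integral B x 0 1 (x 1)"

end

theory Submission
  imports Defs "HOL-Complex_Analysis.Great_Picard"
begin


lemma part_mono:
  assumes "is_partition a b n t" "i \<le> j" "j \<le> n"
  shows "t i \<le> t j"
  using assms(2,3)
proof (induction j)
  case 0 then show ?case by simp
next
  case (Suc j)
  have "t j < t (Suc j)" using assms(1) Suc.prems unfolding is_partition_def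
    by (metis atLeastAtMost_iff diff_Suc_1 le_add1 plus_1_eq_Suc)
  then show ?case using Suc by (cases "i = Suc j") auto
qed

lemma part_in:
  assumes "is_partition a b n t" "i \<le> n"
  shows "a \<le> t i" "t i \<le> b"
  using part_mono[OF assms(1), of 0 i] part_mono[OF assms(1), of i n] assms
  unfolding is_partition_def by auto

lemma part_step:
  assumes "is_partition a b n t" "i \<in> {1..n}"
  shows "t (i - 1) < t i"
  using assms unfolding is_partition_def by auto

lemma sum_telescope:
  fixes u :: "nat \<Rightarrow> 'a::ab_group_add"
  shows "(\<Sum>i=1..n. u i - u (i - 1)) = u n - u 0"
  by (induction n) (auto simp: sum.cl_ivl_Suc)

lemma part_int_sum_aux:
  fixes g :: "real \<Rightarrow> real"
  assumes "is_partition a b n t" "g integrable_on {a..b}" "m \<le> n"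
  shows "integral {t 0..t m} g = (\<Sum>i=1..m. integral {t (i - 1)..t i} g)"
  using assms(3)
proof (induction m)
  case 0 then show ?case by simp
next
  case (Suc m)
  have le: "t 0 \<le> t m" "t m \<le> t (Suc m)" using part_mono[OF assms(1)] Suc.prems by auto
  have "a \<le> t 0" "t (Suc m) \<le> b" using part_in[OF assms(1)] Suc.prems by auto
  then have "g integrable_on {t 0..t (Suc m)}"
    using integrable_subinterval_real[OF assms(2)] by auto
  then have "integral {t 0..t (Suc m)} g = integral {t 0..t m} g + integral {t m..t (Suc m)} g"
    using Henstock_Kurzweil_Integration.integral_combine[OF le] by metis
  then show ?case using Suc by simp
qed

lemma part_int_sum:
  fixes g :: "real \<Rightarrow> real"
  assumes "is_partition a b n t" "g integrable_on {a..b}"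
  shows "integral {a..b} g = (\<Sum>i=1..n. integral {t (i - 1)..t i} g)"
  using part_int_sum_aux[OF assms order_refl] assms(1) unfolding is_partition_def by simp


lemma part_ext:
  assumes "is_partition a x n t" "x < y"
  shows "is_partition a y (Suc n) (t(Suc n := y))"
    "(\<Sum>i=1..Suc n. \<bar>A ((t(Suc n := y)) i) - A ((t(Suc n := y)) (i - 1))\<bar>)
      = (\<Sum>i=1..n. \<bar>A (t i) - A (t (i - 1))\<bar>) + \<bar>A y - A x\<bar>"
proof -
  show "is_partition a y (Suc n) (t(Suc n := y))"
    using assms unfolding is_partition_def
    by (auto simp: le_Suc_eq)
  have "(\<Sum>i=1..n. \<bar>A ((t(Suc n := y)) i) - A ((t(Suc n := y)) (i - 1))\<bar>)
     = (\<Sum>i=1..n. \<bar>A (t i) - A (t (i - 1))\<bar>)"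
    by (rule sum.cong) auto
  moreover have "t n = x" using assms unfolding is_partition_def by auto
  ultimately show "(\<Sum>i=1..Suc n. \<bar>A ((t(Suc n := y)) i) - A ((t(Suc n := y)) (i - 1))\<bar>)
      = (\<Sum>i=1..n. \<bar>A (t i) - A (t (i - 1))\<bar>) + \<bar>A y - A x\<bar>"
    by (simp add: sum.cl_ivl_Suc)
qed

lemma part_one:
  assumes "a < x"
  shows "is_partition a x 1 (\<lambda>i::nat. if i = 0 then a else x)"
    "(\<Sum>i=1..1. \<bar>A ((\<lambda>i::nat. if i = 0 then a else x) i) - A ((\<lambda>i::nat. if i = 0 then a else x) (i - 1))\<bar>)
     = \<bar>A x - A a\<bar>"
  using assms unfolding is_partition_def by (auto simp: atLeastAtMost_singleton)

lemma bv_decomp: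
  assumes bv: "bounded_variation_on A a b" and ab: "a < b"
  obtains G where "\<And>x. x \<le> a \<Longrightarrow> G x = 0"
    and "\<And>x y. a \<le> x \<Longrightarrow> x \<le> y \<Longrightarrow> y \<le> b \<Longrightarrow> G x + \<bar>A y - A x\<bar> \<le> G y"
proof -
  obtain M where M: "\<And>n t. is_partition a b n t \<Longrightarrow> (\<Sum>i=1..n. \<bar>A (t i) - A (t (i - 1))\<bar>) \<le> M"
    using bv unfolding bounded_variation_on_def by blast
  define S where "S x = {(\<Sum>i=1..n. \<bar>A (t i) - A (t (i - 1))\<bar>) | n t. is_partition a x n t}" for x
  define G where "G x = (if x \<le> a then 0 else Sup (S x))" for x
  have one: "\<bar>A x - A a\<bar> \<in> S x" if "a < x" for x
    unfolding S_def mem_Collect_eq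
    apply (rule exI[of _ "1"], rule exI[of _ "\<lambda>i::nat. if i = 0 then a else x"])
    using part_one(1)[OF that] part_one(2)[OF that, of A] by simp
  have bdd: "s \<le> M" if sx: "s \<in> S x" "a < x" "x \<le> b" for s x
  proof -
    obtain n t where nt: "is_partition a x n t" "s = (\<Sum>i=1..n. \<bar>A (t i) - A (t (i - 1))\<bar>)"
      using sx unfolding S_def by auto
    show ?thesis
    proof (cases "x = b")
      case True then show ?thesis using M nt by blast
    next
      case False
      then have "x < b" using that by simp
      from part_ext(2)[OF nt(1) this, of A] M[OF part_ext(1)[OF nt(1) this]] nt(2)
      show ?thesis by (smt (verit) abs_ge_zero)
    qed
  qed
  have bddS: "bdd_above (S x)" if "a < x" "x \<le> b" for x
    using bdd that unfolding bdd_above_def by blast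
  have ext: "s + \<bar>A y - A x\<bar> \<in> S y" if sx: "s \<in> S x" and xy: "x < y" for s x y
  proof -
    obtain n t where nt: "is_partition a x n t" "s = (\<Sum>i=1..n. \<bar>A (t i) - A (t (i - 1))\<bar>)"
      using sx unfolding S_def by auto
    show ?thesis unfolding S_def mem_Collect_eq
      apply (rule exI[of _ "Suc n"], rule exI[of _ "t(Suc n := y)"])
      using part_ext(1)[OF nt(1) xy] part_ext(2)[OF nt(1) xy, of A] nt(2) by simp
  qed
  show ?thesis
  proof
    show "G x = 0" if "x \<le> a" for x using that G_def by simp
    fix x y assume xy: "a \<le> x" "x \<le> y" "y \<le> b"
    show "G x + \<bar>A y - A x\<bar> \<le> G y"
    proof (cases "x = y")
      case True then show ?thesis by simp
    next
      case False
      then have xy': "x < y" using xy by simp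
      show ?thesis
      proof (cases "x = a")
        case True
        then have "G y = Sup (S y)" using xy' G_def by simp
        moreover have "\<bar>A y - A a\<bar> \<le> Sup (S y)"
          using cSup_upper[OF one[of y] bddS[of y]] xy' xy True by simp
        ultimately show ?thesis using True G_def by simp
      next
        case False
        then have ax: "a < x" using xy by simp
        have "Sup (S x) \<le> Sup (S y) - \<bar>A y - A x\<bar>"
        proof (rule cSup_least)
          show "S x \<noteq> {}" using one[OF ax] by blast
          fix s assume "s \<in> S x"
          then have "s + \<bar>A y - A x\<bar> \<le> Sup (S y)"
            using cSup_upper[OF ext[OF \<open>s \<in> S x\<close> xy'] bddS[of y]] xy' ax xy by linarith
          then show "s \<le> Sup (S y) - \<bar>A y - A x\<bar>" by simp
        qed
        then show ?thesis using ax xy' G_def by simp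
      qed
    qed
  qed
qed


lemma bv_mono_parts:
  assumes bv: "bounded_variation_on A a b" and ab: "a < b" and lo: "lo \<le> a"
  obtains G where "mono_on {lo..b} G" "mono_on {lo..b} (\<lambda>x. G x - A (max a x))"
    "\<And>x. x \<le> a \<Longrightarrow> G x = 0"
    "\<And>x y. a \<le> x \<Longrightarrow> x \<le> y \<Longrightarrow> y \<le> b \<Longrightarrow> G x + \<bar>A y - A x\<bar> \<le> G y"
proof -
  obtain G where G0: "\<And>x. x \<le> a \<Longrightarrow> G x = 0"
    and G1: "\<And>x y. a \<le> x \<Longrightarrow> x \<le> y \<Longrightarrow> y \<le> b \<Longrightarrow> G x + \<bar>A y - A x\<bar> \<le> G y"
    using bv_decomp[OF bv ab] by blast
  have Gmax: "G x = G (max a x)" for x using G0 by (cases "x \<le> a") (auto simp: max_def)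
  have key: "G (max a x) + \<bar>A (max a y) - A (max a x)\<bar> \<le> G (max a y)"
    if "x \<le> y" "y \<le> b" for x y
    using G1[of "max a x" "max a y"] that ab by auto
  show ?thesis
  proof
    show "mono_on {lo..b} G"
    proof (rule mono_onI)
      fix x y assume "x \<in> {lo..b}" "y \<in> {lo..b}" "x \<le> y"
      then show "G x \<le> G y" using key[of x y] Gmax[of x] Gmax[of y] by auto
    qed
    show "mono_on {lo..b} (\<lambda>x. G x - A (max a x))"
    proof (rule mono_onI)
      fix x y assume "x \<in> {lo..b}" "y \<in> {lo..b}" "x \<le> y"
      then show "G x - A (max a x) \<le> G y - A (max a y)" using key[of x y] Gmax[of x] Gmax[of y] abs_ge_self[of "A (max a y) - A (max a x)"] by auto
    qed
  qed (use G0 G1 in auto)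
qed

definition DEC :: "(real \<Rightarrow> real) \<Rightarrow> bool" where
  "DEC A \<longleftrightarrow> (\<forall>e>0. \<exists>A1 G H d. d > 0 \<and> mono_on {0..1} G \<and> mono_on {0..1} H \<and>
      (\<forall>s\<in>{0..1}. A s = A1 s + G s - H s) \<and>
      (\<forall>u\<in>{0..1}. \<forall>v\<in>{0..1}. \<bar>u - v\<bar> < d \<longrightarrow> \<bar>A1 u - A1 v\<bar> \<le> e))"

lemma DEC_cont:
  assumes "continuous_on {0..1} A"
  shows "DEC A"
  unfolding DEC_def
proof (intro allI impI)
  fix e :: real assume e: "e > 0"
  obtain d where d: "d > 0" "\<And>x x'. x \<in> {0..1} \<Longrightarrow> x' \<in> {0..1} \<Longrightarrow> dist x' x < d \<Longrightarrow> dist (A x') (A x) < e"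
    using compact_uniformly_continuous[OF assms compact_Icc] e unfolding uniformly_continuous_on_def by metis
  show "\<exists>A1 G H d. d > 0 \<and> mono_on {0..1} G \<and> mono_on {0..1} H \<and>
      (\<forall>s\<in>{0..1}. A s = A1 s + G s - H s) \<and>
      (\<forall>u\<in>{0..1}. \<forall>v\<in>{0..1}. \<bar>u - v\<bar> < d \<longrightarrow> \<bar>A1 u - A1 v\<bar> \<le> e)"
    apply (rule exI[of _ A], rule exI[of _ "\<lambda>_. 0"], rule exI[of _ "\<lambda>_. 0"], rule exI[of _ d])
    using d by (auto simp: mono_on_def dist_real_def less_imp_le)
qed

lemma DEC_bv:
  assumes "bounded_variation_on A 0 1"
  shows "DEC A"
  unfolding DEC_def
proof (intro allI impI)
  fix e :: real assume e: "e > 0"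
  obtain G where G: "mono_on {0..1} G" "mono_on {0..1} (\<lambda>x. G x - A (max 0 x))"
    using bv_mono_parts[OF assms zero_less_one order_refl] by metis
  show "\<exists>A1 G H d. d > 0 \<and> mono_on {0..1} G \<and> mono_on {0..1} H \<and>
      (\<forall>s\<in>{0..1}. A s = A1 s + G s - H s) \<and>
      (\<forall>u\<in>{0..1}. \<forall>v\<in>{0..1}. \<bar>u - v\<bar> < d \<longrightarrow> \<bar>A1 u - A1 v\<bar> \<le> e)"
    apply (rule exI[of _ "\<lambda>_. 0"], rule exI[of _ G], rule exI[of _ "\<lambda>x. G x - A (max 0 x)"], rule exI[of _ 1])
    using G e by auto
qed

lemma DEC_omega:
  assumes "Omega01 A"
  shows "DEC A"
  unfolding DEC_def
proof (intro allI impI)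
  fix e :: real assume e: "e > 0"
  obtain a where a: "0 < a" "a < 1" "Omega_eps e 0 a A" "bounded_variation_on A a 1"
    using assms e unfolding Omega01_def by blast
  obtain \<delta> where \<delta>: "\<delta> > 0" "\<And>t s. t\<in>{0..a} \<Longrightarrow> s\<in>{0..a} \<Longrightarrow> 0 \<le> s - t \<and> s - t \<le> \<delta> \<Longrightarrow>
        (\<forall>\<tau> \<sigma>. t \<le> \<tau> \<and> \<tau> \<le> \<sigma> \<and> \<sigma> \<le> s \<longrightarrow> \<bar>A \<sigma> - A \<tau>\<bar> \<le> e)"
    using a(3) unfolding Omega_eps_def by blast
  have Q: "\<bar>A p - A q\<bar> \<le> e" if "p \<in> {0..a}" "q \<in> {0..a}" "\<bar>p - q\<bar> \<le> \<delta>" for p q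
  proof (cases "p \<le> q")
    case True
    then show ?thesis using \<delta>(2)[of p q] that by (auto simp: abs_minus_commute)
  next
    case False
    then show ?thesis using \<delta>(2)[of q p] that by auto
  qed
  obtain G where G: "mono_on {0..1} G" "mono_on {0..1} (\<lambda>x. G x - A (max a x))"
    using bv_mono_parts[OF a(4) a(2) less_imp_le[OF a(1)]] by metis
  define A1 where "A1 s = (if s < a then A s - A a else 0)" for s
  have osc: "\<bar>A1 u - A1 v\<bar> \<le> e" if "u \<in> {0..1}" "v \<in> {0..1}" "\<bar>u - v\<bar> < \<delta>" for u v
  proof -
    consider "u < a" "v < a" | "u < a" "a \<le> v" | "a \<le> u" "v < a" | "a \<le> u" "a \<le> v" by linarith
    then show ?thesis
    proof cases
      case 1 then show ?thesis using Q[of u v] that unfolding A1_def by auto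
    next
      case 2 then show ?thesis using Q[of u a] that a unfolding A1_def by auto
    next
      case 3 then show ?thesis using Q[of v a] that a unfolding A1_def by (auto simp: abs_minus_commute)
    next
      case 4 then show ?thesis using e unfolding A1_def by auto
    qed
  qed
  show "\<exists>A1 G H d. d > 0 \<and> mono_on {0..1} G \<and> mono_on {0..1} H \<and>
      (\<forall>s\<in>{0..1}. A s = A1 s + G s - H s) \<and>
      (\<forall>u\<in>{0..1}. \<forall>v\<in>{0..1}. \<bar>u - v\<bar> < d \<longrightarrow> \<bar>A1 u - A1 v\<bar> \<le> e)"
    apply (rule exI[of _ A1], rule exI[of _ G], rule exI[of _ "\<lambda>x. G x - A (max a x)"], rule exI[of _ \<delta>])
    using G \<delta>(1) osc by (auto simp: A1_def max_def)
qed

lemma DEC_hat: "Omega_hat01 A \<Longrightarrow> DEC A"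
  unfolding Omega_hat01_def using DEC_cont DEC_bv DEC_omega by blast

lemma bounded_hat:
  assumes "Omega_hat01 A"
  shows "bounded (A ` {0..1})"
proof -
  consider "Omega01 A" | "continuous_on {0..1} A" | "bounded_variation_on A 0 1"
    using assms unfolding Omega_hat01_def by blast
  then show ?thesis
  proof cases
    case 1 then show ?thesis unfolding Omega01_def by blast
  next
    case 2 then show ?thesis using compact_continuous_image compact_imp_bounded compact_Icc by blast
  next
    case 3
    obtain G where G0: "\<And>x. x \<le> 0 \<Longrightarrow> G x = 0"
      and G1: "\<And>x y. 0 \<le> x \<Longrightarrow> x \<le> y \<Longrightarrow> y \<le> 1 \<Longrightarrow> G x + \<bar>A y - A x\<bar> \<le> G y"
      using bv_decomp[OF 3] by auto
    have "\<bar>A x\<bar> \<le> \<bar>A 0\<bar> + G 1" if "x \<in> {0..1}" for x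
      using G1[of 0 x] G1[of x 1] G0[of 0] that by auto
    then have "\<forall>y\<in>A ` {0..1}. norm y \<le> \<bar>A 0\<bar> + G 1" by auto
    then show ?thesis unfolding bounded_iff by blast
  qed
qed


lemma int_bound:
  fixes f :: "real \<Rightarrow> real"
  assumes "f integrable_on {a..b}" "a \<le> b" "\<And>x. x \<in> {a..b} \<Longrightarrow> \<bar>f x\<bar> \<le> B"
  shows "\<bar>integral {a..b} f\<bar> \<le> B * (b - a)"
proof -
  have "0 \<le> B" using assms(2) assms(3)[of a] by auto
  have "norm (integral {a..b} f) \<le> B * (b - a)"
    using has_integral_bound_real[OF \<open>0 \<le> B\<close> finite.emptyI integrable_integral[OF assms(1)]] assms(3)
      content_real[OF assms(2)] by auto
  then show ?thesis by simp
qed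

lemma approx_osc:
  fixes f :: "real \<Rightarrow> real"
  assumes "d > 0" "e \<ge> 0" and osc: "\<And>u v. u \<in> {a..b} \<Longrightarrow> v \<in> {a..b} \<Longrightarrow> \<bar>u - v\<bar> < d \<Longrightarrow> \<bar>f u - f v\<bar> \<le> e"
  obtains g where "\<forall>x\<in>{a..b}. norm (f x - g x) \<le> e" "g integrable_on {a..b}"
proof -
  obtain p where ptag: "p tagged_division_of cbox a b" and finep: "(\<lambda>x. ball x d) fine p"
    using fine_division_exists[OF gauge_ball[OF \<open>0 < d\<close>], of a b] .
  have *: "\<forall>i\<in>snd ` p. \<exists>g. (\<forall>x\<in>i. norm (f x - g x) \<le> e) \<and> g integrable_on i"
  proof (intro ballI)
    fix l assume "l \<in> snd ` p"
    then obtain x where as: "(x, l) \<in> p" by force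
    obtain a' b' where l: "l = cbox a' b'"
      using as ptag by blast
    then have x: "x \<in> cbox a' b'"
      using as ptag by auto
    have lsub: "l \<subseteq> cbox a b" using as ptag by blast
    show "\<exists>g. (\<forall>x\<in>l. norm (f x - g x) \<le> e) \<and> g integrable_on l"
    proof (intro exI conjI strip)
      show "(\<lambda>y. f x) integrable_on l"
        unfolding integrable_on_def l by blast
    next
      fix y
      assume y: "y \<in> l"
      then have "y \<in> ball x d"
        using as finep by fastforce
      then have "\<bar>y - x\<bar> < d" by (simp add: dist_real_def abs_minus_commute)
      moreover have "x \<in> {a..b}" "y \<in> {a..b}" using x l lsub y by auto
      ultimately show "norm (f y - f x) \<le> e" using osc by simp
    qed
  qed
  from approximable_on_division[OF \<open>e \<ge> 0\<close> division_of_tagged_division[OF ptag] *]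
  show ?thesis using that by (metis box_real(2))
qed

lemma DEC_integrable:
  assumes "DEC A"
  shows "A integrable_on {0..1}"
proof -
  have "A integrable_on cbox 0 1"
  proof (rule integrable_uniform_limit)
    fix e :: real assume e: "e > 0"
    have "\<exists>A1 G H d. d > 0 \<and> mono_on {0..1} G \<and> mono_on {0..1} H \<and>
      (\<forall>s\<in>{0..1}. A s = A1 s + G s - H s) \<and>
      (\<forall>u\<in>{0..1}. \<forall>v\<in>{0..1}. \<bar>u - v\<bar> < d \<longrightarrow> \<bar>A1 u - A1 v\<bar> \<le> e)"
      using assms e unfolding DEC_def by simp
    then obtain A1 G H d where d: "d > 0" "mono_on {0..1} G" "mono_on {0..1} H"
      "\<forall>s\<in>{0..1}. A s = A1 s + G s - H s"
      "\<forall>u\<in>{0..1}. \<forall>v\<in>{0..1}. \<bar>u - v\<bar> < d \<longrightarrow> \<bar>A1 u - A1 v\<bar> \<le> e"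
      by blast
    have osc: "\<And>u v. u \<in> {0..1} \<Longrightarrow> v \<in> {0..1} \<Longrightarrow> \<bar>u - v\<bar> < d \<Longrightarrow> \<bar>A1 u - A1 v\<bar> \<le> e"
      using d(5) by blast
    obtain g where g: "\<forall>x\<in>{0..1}. norm (A1 x - g x) \<le> e" "g integrable_on {0..1}"
      using approx_osc[where f=A1 and a=0 and b=1, OF d(1) less_imp_le[OF e] osc] by blast
    have "(\<lambda>x. g x + G x - H x) integrable_on {0..1}"
      using g(2) integrable_on_mono_on[OF d(2)] integrable_on_mono_on[OF d(3)]
      by (intro Henstock_Kurzweil_Integration.integrable_diff Henstock_Kurzweil_Integration.integrable_add)
    moreover have "\<forall>x\<in>{0..1}. norm (A x - (g x + G x - H x)) \<le> e"
    proof
      fix x :: real assume x: "x \<in> {0..1}"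
      have "A x - (g x + G x - H x) = A1 x - g x" using d(4) x by simp
      moreover have "norm (A1 x - g x) \<le> e" using g(1) x by blast
      ultimately show "norm (A x - (g x + G x - H x)) \<le> e" by metis
    qed
    ultimately show "\<exists>g. (\<forall>x\<in>cbox 0 1. norm (A x - g x) \<le> e) \<and> g integrable_on cbox 0 1"
      unfolding box_real(2) by (intro exI[of _ "\<lambda>x. g x + G x - H x"] conjI)
  qed
  then show ?thesis unfolding box_real(2) .
qed


definition OSC :: "(real \<Rightarrow> real) \<Rightarrow> bool" where
  "OSC A \<longleftrightarrow> (\<forall>\<epsilon>>0. \<exists>\<delta>>0. \<forall>n t \<xi>. is_partition 0 1 n t \<longrightarrow>
        (\<forall>i\<in>{1..n}. t i - t (i - 1) < \<delta>) \<longrightarrow>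
        (\<forall>i\<in>{1..n}. t (i - 1) \<le> \<xi> i \<and> \<xi> i \<le> t i) \<longrightarrow>
        (\<exists>w. (\<forall>i\<in>{1..n}. \<forall>s\<in>{t (i - 1)..t i}. \<bar>A (\<xi> i) - A s\<bar> \<le> w i) \<and>
             (\<Sum>i=1..n. w i * (t i - t (i - 1))) \<le> \<epsilon>))"

lemma DEC_OSC:
  assumes "DEC A"
  shows "OSC A"
  unfolding OSC_def
proof (intro allI impI)
  fix \<epsilon> :: real assume \<epsilon>: "\<epsilon> > 0"
  then obtain A1 G H d where d: "d > 0" "mono_on {0..1} G" "mono_on {0..1} H"
      "\<forall>s\<in>{0..1}. A s = A1 s + G s - H s"
      "\<forall>u\<in>{0..1}. \<forall>v\<in>{0..1}. \<bar>u - v\<bar> < d \<longrightarrow> \<bar>A1 u - A1 v\<bar> \<le> \<epsilon>/2"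
    using assms \<epsilon> unfolding DEC_def by (metis half_gt_zero)
  define V where "V = (G 1 - G 0) + (H 1 - H 0)"
  have V0: "V \<ge> 0" using d(2,3) unfolding V_def mono_on_def by fastforce
  define \<delta> where "\<delta> = min d (\<epsilon> / (2 * (V + 1)))"
  have \<delta>0: "\<delta> > 0" using d(1) \<epsilon> V0 unfolding \<delta>_def by auto
  have \<delta>V: "\<delta> * V \<le> \<epsilon> / 2"
  proof -
    have "\<delta> * V \<le> \<epsilon> / (2 * (V + 1)) * V" using V0 unfolding \<delta>_def by (intro mult_right_mono min.cobounded2)
    also have "\<dots> = \<epsilon> / 2 * (V / (V + 1))" using V0 by (simp add: field_simps)
    also have "\<dots> \<le> \<epsilon> / 2" using V0 \<epsilon> by (intro mult_left_le) auto
    finally show ?thesis .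
  qed
  show "\<exists>\<delta>>0. \<forall>n t \<xi>. is_partition 0 1 n t \<longrightarrow>
        (\<forall>i\<in>{1..n}. t i - t (i - 1) < \<delta>) \<longrightarrow>
        (\<forall>i\<in>{1..n}. t (i - 1) \<le> \<xi> i \<and> \<xi> i \<le> t i) \<longrightarrow>
        (\<exists>w. (\<forall>i\<in>{1..n}. \<forall>s\<in>{t (i - 1)..t i}. \<bar>A (\<xi> i) - A s\<bar> \<le> w i) \<and>
             (\<Sum>i=1..n. w i * (t i - t (i - 1))) \<le> \<epsilon>)"
  proof (intro exI[of _ \<delta>] conjI allI impI)
    show "\<delta> > 0" by (rule \<delta>0)
    fix n t \<xi>
    assume P: "is_partition 0 1 n t" and mesh: "\<forall>i\<in>{1..n}. t i - t (i - 1) < \<delta>"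
      and tags: "\<forall>i\<in>{1..n}. t (i - 1) \<le> \<xi> i \<and> \<xi> i \<le> t i"
    define w where "w i = \<epsilon>/2 + (G (t i) - G (t (i - 1))) + (H (t i) - H (t (i - 1)))" for i
    have tin: "t i \<in> {0..1}" if "i \<le> n" for i using part_in[OF P that] by auto
    show "\<exists>w. (\<forall>i\<in>{1..n}. \<forall>s\<in>{t (i - 1)..t i}. \<bar>A (\<xi> i) - A s\<bar> \<le> w i) \<and>
             (\<Sum>i=1..n. w i * (t i - t (i - 1))) \<le> \<epsilon>"
    proof (intro exI[of _ w] conjI ballI)
      fix i s assume i: "i \<in> {1..n}" and s: "s \<in> {t (i - 1)..t i}"
      have t0: "t (i - 1) \<in> {0..1}" "t i \<in> {0..1}" using tin i by auto
      have xi: "\<xi> i \<in> {t (i - 1)..t i}" using tags i by auto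
      have xi01: "\<xi> i \<in> {0..1}" "s \<in> {0..1}" using xi s t0 by auto
      have "t i - t (i - 1) < \<delta>" using mesh i by blast
      then have "\<bar>\<xi> i - s\<bar> < d" using xi s unfolding \<delta>_def by (auto simp: abs_if)
      then have a1: "\<bar>A1 (\<xi> i) - A1 s\<bar> \<le> \<epsilon>/2" using d(5) xi01 by auto
      have mg: "G (t (i - 1)) \<le> G u \<and> G u \<le> G (t i) \<and> H (t (i - 1)) \<le> H u \<and> H u \<le> H (t i)"
        if u: "u \<in> {t (i - 1)..t i}" for u
      proof -
        have u01: "u \<in> {0..1}" using u t0 by auto
        show ?thesis using mono_onD[OF d(2)] mono_onD[OF d(3)] u t0 u01 by auto
      qed
      have "A (\<xi> i) - A s = (A1 (\<xi> i) - A1 s) + (G (\<xi> i) - G s) - (H (\<xi> i) - H s)"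
        using d(4) xi01 by auto
      then show "\<bar>A (\<xi> i) - A s\<bar> \<le> w i"
        unfolding w_def using a1 mg[OF xi] mg[OF s] by linarith
    next
      have dt: "0 \<le> t i - t (i - 1)" "t i - t (i - 1) \<le> \<delta>" if "i \<in> {1..n}" for i
        using part_step[OF P that] bspec[OF mesh that] by auto
      have mG: "0 \<le> G (t i) - G (t (i - 1))" "0 \<le> H (t i) - H (t (i - 1))" if "i \<in> {1..n}" for i
        using part_step[OF P that] tin[of i] tin[of "i - 1"] that d(2,3) unfolding mono_on_def by auto
      have "(\<Sum>i=1..n. w i * (t i - t (i - 1)))
          \<le> (\<Sum>i=1..n. \<epsilon>/2 * (t i - t (i - 1)) + ((G (t i) - G (t (i - 1))) + (H (t i) - H (t (i - 1)))) * \<delta>)"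
      proof (rule sum_mono)
        fix i assume i: "i \<in> {1..n}"
        have "((G (t i) - G (t (i - 1))) + (H (t i) - H (t (i - 1)))) * (t i - t (i - 1))
            \<le> ((G (t i) - G (t (i - 1))) + (H (t i) - H (t (i - 1)))) * \<delta>"
          using dt[OF i] mG[OF i] by (intro mult_left_mono) auto
        then show "w i * (t i - t (i - 1)) \<le> \<epsilon>/2 * (t i - t (i - 1)) + ((G (t i) - G (t (i - 1))) + (H (t i) - H (t (i - 1)))) * \<delta>"
          unfolding w_def by (simp add: algebra_simps)
      qed
      also have "\<dots> = (\<Sum>i=1..n. (\<epsilon>/2 * t i + \<delta> * (G (t i) + H (t i))) - (\<epsilon>/2 * t (i - 1) + \<delta> * (G (t (i - 1)) + H (t (i - 1)))))"
        by (rule sum.cong) (auto simp: algebra_simps)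
      also have "\<dots> = \<epsilon>/2 + \<delta> * V"
        unfolding sum_telescope[of "\<lambda>i. \<epsilon>/2 * t i + \<delta> * (G (t i) + H (t i))"]
        using P unfolding V_def is_partition_def by (simp add: algebra_simps)
      also have "\<dots> \<le> \<epsilon>" using \<delta>V by simp
      finally show "(\<Sum>i=1..n. w i * (t i - t (i - 1))) \<le> \<epsilon>" .
    qed
  qed
qed


lemma prod_int:
  fixes A g :: "real \<Rightarrow> real"
  assumes "bounded (A ` {0..1})" "A integrable_on {0..1}" "continuous_on {0..1} g"
  shows "(\<lambda>s. A s * g s) integrable_on {0..1}"
proof -
  have "(\<lambda>s. A s * g s) absolutely_integrable_on {0..1}"
    by (rule absolutely_integrable_bounded_measurable_product_real[OF integrable_imp_measurable[OF assms(2)] _ assms(1) absolutely_integrable_continuous_real[OF assms(3)]]) simp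
  then show ?thesis unfolding absolutely_integrable_on_def by blast
qed

lemma RS_main:
  fixes A x x' :: "real \<Rightarrow> real"
  assumes Abd: "bounded (A ` {0..1})" and Aint: "A integrable_on {0..1}" and osc: "OSC A"
    and xd: "\<And>t. t \<in> {0..1} \<Longrightarrow> (x has_real_derivative x' t) (at t within {0..1})"
    and x'c: "continuous_on {0..1} x'"
  shows "has_RS_integral A x 0 1 (integral {0..1} (\<lambda>s. A s * x' s))"
  unfolding has_RS_integral_def
proof (intro allI impI)
  fix e :: real assume e: "e > 0"
  have "bounded (x' ` {0..1})" using compact_continuous_image[OF x'c compact_Icc] compact_imp_bounded by blast
  then obtain Mx0 where "\<forall>y\<in>x' ` {0..1}. norm y \<le> Mx0" unfolding bounded_iff by blast
  then have Mx0: "\<And>s. s \<in> {0..1} \<Longrightarrow> \<bar>x' s\<bar> \<le> Mx0" by auto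
  define Mx where "Mx = max Mx0 0"
  have Mx: "\<And>s. s \<in> {0..1} \<Longrightarrow> \<bar>x' s\<bar> \<le> Mx" "Mx \<ge> 0" using Mx0 unfolding Mx_def by force+
  define \<epsilon> where "\<epsilon> = e / (2 * (Mx + 1))"
  have \<epsilon>: "\<epsilon> > 0" using e Mx unfolding \<epsilon>_def by auto
  have Mxe: "Mx * \<epsilon> < e"
  proof -
    have "Mx * \<epsilon> = e / 2 * (Mx / (Mx + 1))" using Mx unfolding \<epsilon>_def by (simp add: field_simps)
    also have "\<dots> \<le> e / 2" using Mx e by (intro mult_left_le) auto
    also have "\<dots> < e" using e by simp
    finally show ?thesis .
  qed
  obtain \<delta> where \<delta>: "\<delta> > 0" and oscd: "\<forall>n t \<xi>. is_partition 0 1 n t \<longrightarrow>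
        (\<forall>i\<in>{1..n}. t i - t (i - 1) < \<delta>) \<longrightarrow>
        (\<forall>i\<in>{1..n}. t (i - 1) \<le> \<xi> i \<and> \<xi> i \<le> t i) \<longrightarrow>
        (\<exists>w. (\<forall>i\<in>{1..n}. \<forall>s\<in>{t (i - 1)..t i}. \<bar>A (\<xi> i) - A s\<bar> \<le> w i) \<and>
             (\<Sum>i=1..n. w i * (t i - t (i - 1))) \<le> \<epsilon>)"
    using osc[unfolded OSC_def, rule_format, OF \<epsilon>] by blast
  have Ax'int: "(\<lambda>s. A s * x' s) integrable_on {0..1}" by (rule prod_int[OF Abd Aint x'c])
  have x'int: "x' integrable_on {0..1}" by (rule integrable_continuous_real[OF x'c])
  show "\<exists>d>0. \<forall>n t \<xi>. is_partition 0 1 n t \<longrightarrow>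
        (\<forall>i\<in>{1..n}. t i - t (i - 1) < d) \<longrightarrow>
        (\<forall>i\<in>{1..n}. t (i - 1) \<le> \<xi> i \<and> \<xi> i \<le> t i) \<longrightarrow>
        \<bar>(\<Sum>i=1..n. A (\<xi> i) * (x (t i) - x (t (i - 1)))) - integral {0..1} (\<lambda>s. A s * x' s)\<bar> < e"
  proof (intro exI[of _ \<delta>] conjI allI impI)
    show "\<delta> > 0" by (rule \<delta>)
    fix n t \<xi>
    assume P: "is_partition 0 1 n t" and mesh: "\<forall>i\<in>{1..n}. t i - t (i - 1) < \<delta>"
      and tags: "\<forall>i\<in>{1..n}. t (i - 1) \<le> \<xi> i \<and> \<xi> i \<le> t i"
    obtain w where w: "\<And>i s. i \<in> {1..n} \<Longrightarrow> s \<in> {t (i - 1)..t i} \<Longrightarrow> \<bar>A (\<xi> i) - A s\<bar> \<le> w i"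
      and wsum: "(\<Sum>i=1..n. w i * (t i - t (i - 1))) \<le> \<epsilon>"
      using mp[OF mp[OF mp[OF spec[OF spec[OF spec[OF oscd, of n], of t], of \<xi>] P] mesh] tags] by blast
    have sub: "{t (i - 1)..t i} \<subseteq> {0..1}" if "i \<in> {1..n}" for i
      using part_in[OF P, of "i - 1"] part_in[OF P, of i] that by auto
    have le: "t (i - 1) \<le> t i" if "i \<in> {1..n}" for i using part_step[OF P that] by simp
    have termb: "\<bar>A (\<xi> i) * (x (t i) - x (t (i - 1))) - integral {t (i - 1)..t i} (\<lambda>s. A s * x' s)\<bar>
        \<le> (w i * Mx) * (t i - t (i - 1))" if i: "i \<in> {1..n}" for i
    proof -
      have i1: "(\<lambda>s. A s * x' s) integrable_on {t (i - 1)..t i}"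
        using integrable_subinterval_real[OF Ax'int sub[OF i]] .
      have i2: "x' integrable_on {t (i - 1)..t i}"
        using integrable_subinterval_real[OF x'int sub[OF i]] .
      have i3: "(\<lambda>s. A (\<xi> i) * x' s) integrable_on {t (i - 1)..t i}"
        using integrable_cmul[OF i2, of "A (\<xi> i)"] by simp
      have "(x' has_integral (x (t i) - x (t (i - 1)))) {t (i - 1)..t i}"
      proof (rule fundamental_theorem_of_calculus[OF le[OF i]])
        fix s assume s: "s \<in> {t (i - 1)..t i}"
        have "(x has_real_derivative x' s) (at s within {t (i - 1)..t i})"
          using has_field_derivative_subset[OF xd sub[OF i]] s sub[OF i] by blast
        then show "(x has_vector_derivative x' s) (at s within {t (i - 1)..t i})"
          by (simp add: has_real_derivative_iff_has_vector_derivative)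
      qed
      then have ftc: "x (t i) - x (t (i - 1)) = integral {t (i - 1)..t i} x'"
        by (simp add: integral_unique)
      have "A (\<xi> i) * (x (t i) - x (t (i - 1))) - integral {t (i - 1)..t i} (\<lambda>s. A s * x' s)
          = integral {t (i - 1)..t i} (\<lambda>s. A (\<xi> i) * x' s) - integral {t (i - 1)..t i} (\<lambda>s. A s * x' s)"
        by (simp only: ftc integral_mult[OF i2])
      also have "\<dots> = integral {t (i - 1)..t i} (\<lambda>s. A (\<xi> i) * x' s - A s * x' s)"
        using Henstock_Kurzweil_Integration.integral_diff[OF i3 i1] by simp
      finally have eq: "A (\<xi> i) * (x (t i) - x (t (i - 1))) - integral {t (i - 1)..t i} (\<lambda>s. A s * x' s)
          = integral {t (i - 1)..t i} (\<lambda>s. A (\<xi> i) * x' s - A s * x' s)" .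
      have "\<bar>integral {t (i - 1)..t i} (\<lambda>s. A (\<xi> i) * x' s - A s * x' s)\<bar> \<le> (w i * Mx) * (t i - t (i - 1))"
      proof (rule int_bound[OF Henstock_Kurzweil_Integration.integrable_diff[OF i3 i1] le[OF i]])
        fix s assume s: "s \<in> {t (i - 1)..t i}"
        have "\<bar>A (\<xi> i) * x' s - A s * x' s\<bar> = \<bar>A (\<xi> i) - A s\<bar> * \<bar>x' s\<bar>"
          by (metis abs_mult left_diff_distrib)
        also have "\<dots> \<le> w i * Mx"
          using w[OF i s] Mx(1)[of s] s sub[OF i] by (intro mult_mono) auto
        finally show "\<bar>A (\<xi> i) * x' s - A s * x' s\<bar> \<le> w i * Mx" .
      qed
      then show ?thesis using eq by simp
    qed
    have "integral {0..1} (\<lambda>s. A s * x' s) = (\<Sum>i=1..n. integral {t (i - 1)..t i} (\<lambda>s. A s * x' s))"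
      by (rule part_int_sum[OF P Ax'int])
    then have "\<bar>(\<Sum>i=1..n. A (\<xi> i) * (x (t i) - x (t (i - 1)))) - integral {0..1} (\<lambda>s. A s * x' s)\<bar>
        = \<bar>\<Sum>i=1..n. A (\<xi> i) * (x (t i) - x (t (i - 1))) - integral {t (i - 1)..t i} (\<lambda>s. A s * x' s)\<bar>"
      by (simp only: sum_subtractf)
    also have "\<dots> \<le> (\<Sum>i=1..n. \<bar>A (\<xi> i) * (x (t i) - x (t (i - 1))) - integral {t (i - 1)..t i} (\<lambda>s. A s * x' s)\<bar>)"
      by (rule sum_abs)
    also have "\<dots> \<le> (\<Sum>i=1..n. (w i * Mx) * (t i - t (i - 1)))"
      by (rule sum_mono) (rule termb)
    also have "\<dots> = Mx * (\<Sum>i=1..n. w i * (t i - t (i - 1)))"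
      by (subst sum_distrib_left) (simp add: mult_ac)
    also have "\<dots> \<le> Mx * \<epsilon>" using wsum Mx(2) by (rule mult_left_mono)
    also have "\<dots> < e" by (rule Mxe)
    finally show "\<bar>(\<Sum>i=1..n. A (\<xi> i) * (x (t i) - x (t (i - 1)))) - integral {0..1} (\<lambda>s. A s * x' s)\<bar> < e" .
  qed
qed


lemma int_cont:
  fixes g :: "real \<Rightarrow> real"
  assumes "continuous_on {0..1} g"
  shows "continuous_on {0..1} (\<lambda>r. integral {0..r} g)"
proof -
  have "continuous (at r within {0..1}) (\<lambda>r. integral {0..r} g)" if "r \<in> {0..1}" for r
    using DERIV_continuous[OF integral_has_real_derivative[OF assms that]] .
  then show ?thesis by (simp add: continuous_on_eq_continuous_within)
qed

lemma sig_in: "h > 0 \<Longrightarrow> s \<in> {0..1} \<Longrightarrow> max 0 (s - h) \<in> {0..(1::real)}"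
  by auto

lemma sig_cont:
  fixes y :: "real \<Rightarrow> real"
  assumes "h > 0" "continuous_on {0..1} y"
  shows "continuous_on {0..1} (\<lambda>s. y (max 0 (s - h)))"
  by (rule continuous_on_compose2[OF assms(2)]) (use assms(1) in \<open>auto intro!: continuous_intros\<close>)

lemma int_zero: "integral {0..0::real} g = (0::real)" by simp

locale odeF =
  fixes F :: "real \<Rightarrow> real \<Rightarrow> real" and M :: real
  assumes Fc: "\<And>y. continuous_on {0..1} y \<Longrightarrow> continuous_on {0..1} (\<lambda>s. F s (y s))"
    and Fb: "\<And>s u. s \<in> {0..1} \<Longrightarrow> \<bar>F s u\<bar> \<le> M"
    and Fu: "\<And>e. e > 0 \<Longrightarrow> \<exists>\<eta>>0. \<forall>s\<in>{0..1}. \<forall>u v. \<bar>u - v\<bar> < \<eta> \<longrightarrow> \<bar>F s u - F s v\<bar> < e"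
begin

lemma M0: "M \<ge> 0" using Fb[of 0 0] by auto

definition Wop :: "real \<Rightarrow> (real \<Rightarrow> real) \<Rightarrow> real \<Rightarrow> real" where
  "Wop h y r = - integral {0..r} (\<lambda>s. F s (y (max 0 (s - h))))"

definition Tstep :: "real \<Rightarrow> real \<Rightarrow> real \<Rightarrow> real \<Rightarrow> (real \<Rightarrow> real) \<Rightarrow> real \<Rightarrow> real" where
  "Tstep lam h c d y t = c + d * t + lam * integral {0..t} (Wop h y)"

definition Xit :: "real \<Rightarrow> real \<Rightarrow> real \<Rightarrow> real \<Rightarrow> nat \<Rightarrow> real \<Rightarrow> real" where
  "Xit lam h c d k = (Tstep lam h c d ^^ k) (\<lambda>t. c)"

lemma Xit_0: "Xit lam h c d 0 = (\<lambda>t. c)" unfolding Xit_def by simp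
lemma Xit_Suc: "Xit lam h c d (Suc k) = Tstep lam h c d (Xit lam h c d k)" unfolding Xit_def by simp

lemma integrand_cont:
  assumes "h > 0" "continuous_on {0..1} y"
  shows "continuous_on {0..1} (\<lambda>s. F s (y (max 0 (s - h))))"
  using Fc[OF sig_cont[OF assms]] .

lemma Wop_cont:
  assumes "h > 0" "continuous_on {0..1} y"
  shows "continuous_on {0..1} (Wop h y)"
  unfolding Wop_def using int_cont[OF integrand_cont[OF assms]] by (intro continuous_intros)

lemma Wop_bound:
  assumes "h > 0" "continuous_on {0..1} y" "r \<in> {0..1}"
  shows "\<bar>Wop h y r\<bar> \<le> M"
proof -
  have "\<bar>integral {0..r} (\<lambda>s. F s (y (max 0 (s - h))))\<bar> \<le> M * (r - 0)"
    by (rule int_bound) (use integrable_subinterval_real[OF integrable_continuous_real[OF integrand_cont[OF assms(1,2)]]] assms(3) Fb in auto)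
  then show ?thesis unfolding Wop_def using assms(3) M0 by (smt (verit) atLeastAtMost_iff mult_left_le)
qed

lemma Tstep_cont:
  assumes "h > 0" "continuous_on {0..1} y"
  shows "continuous_on {0..1} (Tstep lam h c d y)"
  unfolding Tstep_def using int_cont[OF Wop_cont[OF assms]] by (intro continuous_intros)

lemma Tstep_0: "Tstep lam h c d y 0 = c"
  unfolding Tstep_def by simp

lemma Xit_cont:
  assumes "h > 0"
  shows "continuous_on {0..1} (Xit lam h c d k)"
  by (induction k) (auto simp: Xit_0 Xit_Suc intro!: Tstep_cont assms continuous_intros)

lemma Wop_local:
  assumes "h > 0" "a \<ge> 0" "\<And>s. s \<in> {0..a} \<Longrightarrow> y1 s = y2 s" "r \<in> {0..a + h}"
  shows "Wop h y1 r = Wop h y2 r"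
  unfolding Wop_def
proof -
  have "integral {0..r} (\<lambda>s. F s (y1 (max 0 (s - h)))) = integral {0..r} (\<lambda>s. F s (y2 (max 0 (s - h))))"
    by (rule integral_cong) (use assms in auto)
  then show "- integral {0..r} (\<lambda>s. F s (y1 (max 0 (s - h)))) = - integral {0..r} (\<lambda>s. F s (y2 (max 0 (s - h))))"
    by simp
qed

lemma Tstep_local:
  assumes "h > 0" "a \<ge> 0" "\<And>s. s \<in> {0..a} \<Longrightarrow> y1 s = y2 s" "t \<in> {0..a + h}"
  shows "Tstep lam h c d y1 t = Tstep lam h c d y2 t"
proof -
  have "integral {0..t} (Wop h y1) = integral {0..t} (Wop h y2)"
    by (rule integral_cong) (use Wop_local[OF assms(1-3)] assms(4) in auto)
  then show ?thesis unfolding Tstep_def by simp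
qed

lemma Xit_consistent:
  assumes "h > 0"
  shows "\<And>t. t \<in> {0..real k * h} \<Longrightarrow> Xit lam h c d (Suc k) t = Xit lam h c d k t"
proof (induction k)
  case 0
  then have "t = 0" by simp
  then show ?case by (simp add: Xit_0 Xit_Suc Tstep_0)
next
  case (Suc k)
  have "Tstep lam h c d (Xit lam h c d (Suc k)) t = Tstep lam h c d (Xit lam h c d k) t"
    by (rule Tstep_local[OF assms, of "real k * h"]) (use Suc assms in \<open>auto simp: algebra_simps\<close>)
  then show ?case by (simp add: Xit_Suc)
qed

lemma Xit_fixed:
  assumes "h > 0" "real n * h \<ge> 1" "t \<in> {0..1}"
  shows "Tstep lam h c d (Xit lam h c d n) t = Xit lam h c d n t"
  using Xit_consistent[OF assms(1), of t n lam c d] assms by (auto simp: Xit_Suc)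

end


lemma int_close:
  fixes g1 g2 :: "real \<Rightarrow> real"
  assumes "continuous_on {0..1} g1" "continuous_on {0..1} g2"
    and "\<And>s. s \<in> {0..1} \<Longrightarrow> \<bar>g1 s - g2 s\<bar> \<le> e" "r \<in> {0..1}"
  shows "\<bar>integral {0..r} g1 - integral {0..r} g2\<bar> \<le> e"
proof -
  have e0: "e \<ge> 0" using assms(3)[of 0] by auto
  have i1: "g1 integrable_on {0..r}" "g2 integrable_on {0..r}"
    using integrable_subinterval_real[OF integrable_continuous_real[OF assms(1)]]
      integrable_subinterval_real[OF integrable_continuous_real[OF assms(2)]] assms(4) by auto
  have "\<bar>integral {0..r} (\<lambda>s. g1 s - g2 s)\<bar> \<le> e * (r - 0)"
    by (rule int_bound[OF Henstock_Kurzweil_Integration.integrable_diff[OF i1]]) (use assms in auto)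
  moreover have "e * (r - 0) \<le> e" using e0 assms(4) by (simp add: mult_left_le)
  ultimately show ?thesis using Henstock_Kurzweil_Integration.integral_diff[OF i1] by simp
qed

context odeF begin

lemma Tstep_lip_aux:
  assumes "h > 0" "continuous_on {0..1} y" "t' \<in> {0..1}" "t \<in> {0..1}" "t' \<le> t"
  shows "\<bar>Tstep lam h c d y t - Tstep lam h c d y t'\<bar> \<le> (\<bar>d\<bar> + \<bar>lam\<bar> * M) * \<bar>t - t'\<bar>"
proof -
  have Wi: "Wop h y integrable_on {0..t}"
    using integrable_subinterval_real[OF integrable_continuous_real[OF Wop_cont[OF assms(1,2)]]] assms by auto
  have comb: "integral {0..t'} (Wop h y) + integral {t'..t} (Wop h y) = integral {0..t} (Wop h y)"
    using Henstock_Kurzweil_Integration.integral_combine[of 0 t' t "Wop h y"] Wi assms by auto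
  have Wi2: "Wop h y integrable_on {t'..t}" using integrable_subinterval_real[OF Wi] assms by auto
  have bnd: "\<bar>integral {t'..t} (Wop h y)\<bar> \<le> M * (t - t')"
    by (rule int_bound[OF Wi2 assms(5)]) (use Wop_bound[OF assms(1,2)] assms in auto)
  have "Tstep lam h c d y t - Tstep lam h c d y t' = d * (t - t') + lam * integral {t'..t} (Wop h y)"
    unfolding Tstep_def comb[symmetric] by (simp add: algebra_simps)
  also have "\<bar>\<dots>\<bar> \<le> \<bar>d\<bar> * (t - t') + \<bar>lam\<bar> * (M * (t - t'))"
  proof -
    have "\<bar>d * (t - t')\<bar> = \<bar>d\<bar> * (t - t')" using assms(5) by (simp add: abs_mult)
    moreover have "\<bar>lam * integral {t'..t} (Wop h y)\<bar> \<le> \<bar>lam\<bar> * (M * (t - t'))"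
      using bnd by (simp add: abs_mult mult_left_mono)
    ultimately show ?thesis using abs_triangle_ineq[of "d * (t - t')" "lam * integral {t'..t} (Wop h y)"] by linarith
  qed
  finally show ?thesis using assms(5) by (simp add: algebra_simps)
qed

lemma Tstep_lip:
  assumes "h > 0" "continuous_on {0..1} y" "t' \<in> {0..1}" "t \<in> {0..1}"
  shows "\<bar>Tstep lam h c d y t - Tstep lam h c d y t'\<bar> \<le> (\<bar>d\<bar> + \<bar>lam\<bar> * M) * \<bar>t - t'\<bar>"
proof (cases "t' \<le> t")
  case True then show ?thesis using Tstep_lip_aux[OF assms] by blast
next
  case False
  then show ?thesis using Tstep_lip_aux[OF assms(1,2,4,3)] by (simp add: abs_minus_commute)
qed

lemma Wop_close:
  assumes "h > 0" "continuous_on {0..1} y1" "continuous_on {0..1} y2"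
    and "\<And>s. s \<in> {0..1} \<Longrightarrow> \<bar>F s (y1 (max 0 (s - h))) - F s (y2 (max 0 (s - h)))\<bar> \<le> e"
    and "r \<in> {0..1}"
  shows "\<bar>Wop h y1 r - Wop h y2 r\<bar> \<le> e"
  using int_close[OF integrand_cont[OF assms(1,2)] integrand_cont[OF assms(1,3)] assms(4,5)]
  unfolding Wop_def by (simp add: abs_minus_commute)

lemma Tstep_close:
  assumes "h > 0" "continuous_on {0..1} y1" "continuous_on {0..1} y2"
    and "\<And>r. r \<in> {0..1} \<Longrightarrow> \<bar>Wop h y1 r - Wop h y2 r\<bar> \<le> e" and "t \<in> {0..1}"
  shows "\<bar>Tstep lam h c1 d1 y1 t - Tstep lam h c2 d2 y2 t\<bar> \<le> \<bar>c1 - c2\<bar> + \<bar>d1 - d2\<bar> + \<bar>lam\<bar> * e"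
proof -
  have I: "\<bar>integral {0..t} (Wop h y1) - integral {0..t} (Wop h y2)\<bar> \<le> e"
    by (rule int_close[OF Wop_cont[OF assms(1,2)] Wop_cont[OF assms(1,3)] assms(4,5)])
  have "Tstep lam h c1 d1 y1 t - Tstep lam h c2 d2 y2 t
      = (c1 - c2) + (d1 - d2) * t + lam * (integral {0..t} (Wop h y1) - integral {0..t} (Wop h y2))"
    unfolding Tstep_def by (simp add: algebra_simps)
  moreover have "\<bar>(d1 - d2) * t\<bar> \<le> \<bar>d1 - d2\<bar>" using assms(5) by (simp add: abs_mult mult_left_le)
  moreover have "\<bar>lam * (integral {0..t} (Wop h y1) - integral {0..t} (Wop h y2))\<bar> \<le> \<bar>lam\<bar> * e"
    using I by (simp add: abs_mult mult_left_mono)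
  ultimately show ?thesis by linarith
qed

lemma Xit_UC:
  assumes "h > 0"
  shows "e > 0 \<Longrightarrow> \<exists>\<delta>>0. \<forall>c' d'. \<bar>c' - c\<bar> < \<delta> \<longrightarrow> \<bar>d' - d\<bar> < \<delta> \<longrightarrow>
          (\<forall>t\<in>{0..1}. \<bar>Xit lam h c' d' k t - Xit lam h c d k t\<bar> < e)"
proof (induction k arbitrary: e)
  case 0
  then show ?case by (intro exI[of _ e]) (auto simp: Xit_0)
next
  case (Suc k)
  define e1 where "e1 = e / (3 * (\<bar>lam\<bar> + 1))"
  have e1: "e1 > 0" using Suc.prems unfolding e1_def by (simp add: pos_divide_less_eq)
  have le1: "\<bar>lam\<bar> * e1 \<le> e / 3"
  proof -
    have "\<bar>lam\<bar> * e1 = e / 3 * (\<bar>lam\<bar> / (\<bar>lam\<bar> + 1))" unfolding e1_def by (simp add: field_simps)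
    also have "\<dots> \<le> e / 3" using Suc.prems by (intro mult_left_le) auto
    finally show ?thesis .
  qed
  obtain \<eta> where \<eta>: "\<eta> > 0" "\<forall>s\<in>{0..1}. \<forall>u v. \<bar>u - v\<bar> < \<eta> \<longrightarrow> \<bar>F s u - F s v\<bar> < e1"
    using Fu[OF e1] by blast
  obtain \<delta>1 where \<delta>1: "\<delta>1 > 0" "\<forall>c' d'. \<bar>c' - c\<bar> < \<delta>1 \<longrightarrow> \<bar>d' - d\<bar> < \<delta>1 \<longrightarrow>
          (\<forall>t\<in>{0..1}. \<bar>Xit lam h c' d' k t - Xit lam h c d k t\<bar> < \<eta>)"
    using Suc.IH[OF \<eta>(1)] by blast
  show ?case
  proof (intro exI[of _ "min \<delta>1 (e/3)"] conjI allI impI ballI)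
    show "min \<delta>1 (e / 3) > 0" using \<delta>1 Suc.prems by simp
    fix c' d' t :: real assume c': "\<bar>c' - c\<bar> < min \<delta>1 (e / 3)" and d': "\<bar>d' - d\<bar> < min \<delta>1 (e / 3)"
      and t: "t \<in> {0..1}"
    have close: "\<bar>Xit lam h c' d' k s - Xit lam h c d k s\<bar> < \<eta>" if "s \<in> {0..1}" for s
      using \<delta>1(2) c' d' that by auto
    have Fclose: "\<bar>F s (Xit lam h c' d' k (max 0 (s - h))) - F s (Xit lam h c d k (max 0 (s - h)))\<bar> \<le> e1"
      if "s \<in> {0..1}" for s
      using \<eta>(2) close[OF sig_in[OF assms that]] that by (simp add: less_imp_le)
    have "\<bar>Tstep lam h c' d' (Xit lam h c' d' k) t - Tstep lam h c d (Xit lam h c d k) t\<bar>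
        \<le> \<bar>c' - c\<bar> + \<bar>d' - d\<bar> + \<bar>lam\<bar> * e1"
      by (rule Tstep_close[OF assms Xit_cont[OF assms] Xit_cont[OF assms] Wop_close[OF assms Xit_cont[OF assms] Xit_cont[OF assms] Fclose] t])
    then have "\<bar>Xit lam h c' d' (Suc k) t - Xit lam h c d (Suc k) t\<bar> \<le> \<bar>c' - c\<bar> + \<bar>d' - d\<bar> + \<bar>lam\<bar> * e1"
      by (simp only: Xit_Suc)
    moreover have "\<bar>c' - c\<bar> < e / 3" "\<bar>d' - d\<bar> < e / 3" using c' d' by auto
    ultimately show "\<bar>Xit lam h c' d' (Suc k) t - Xit lam h c d (Suc k) t\<bar> < e"
      using le1 by linarith
  qed
qed

end


lemma cont_UC:
  fixes G :: "real \<times> real \<Rightarrow> real \<Rightarrow> real" and L :: "(real \<Rightarrow> real) \<Rightarrow> real"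
  assumes UC: "\<And>p e. e > 0 \<Longrightarrow> \<exists>\<delta>>0. \<forall>p'. dist p' p < \<delta> \<longrightarrow> (\<forall>r\<in>{0..1}. \<bar>G p' r - G p r\<bar> \<le> e)"
    and Gc: "\<And>p. continuous_on {0..1} (G p)"
    and Lb: "\<And>g1 g2 e. continuous_on {0..1} g1 \<Longrightarrow> continuous_on {0..1} g2 \<Longrightarrow>
               (\<forall>r\<in>{0..1}. \<bar>g1 r - g2 r\<bar> \<le> e) \<Longrightarrow> \<bar>L g1 - L g2\<bar> \<le> K * e"
    and K: "K \<ge> 0"
  shows "continuous_on UNIV (\<lambda>p. L (G p))"
  unfolding continuous_on_iff
proof (intro ballI allI impI)
  fix p :: "real \<times> real" and e :: real assume e: "e > 0"
  define e' where "e' = e / (K + 1)"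
  have e': "e' > 0" using e K unfolding e'_def by simp
  obtain \<delta> where \<delta>: "\<delta> > 0" "\<forall>p'. dist p' p < \<delta> \<longrightarrow> (\<forall>r\<in>{0..1}. \<bar>G p' r - G p r\<bar> \<le> e')"
    using UC[OF e'] by blast
  have Ke: "K * e' < e"
  proof -
    have "K * e' = e * (K / (K + 1))" unfolding e'_def using K by (simp add: field_simps)
    also have "\<dots> < e * 1" using e K by (intro mult_strict_left_mono) auto
    finally show ?thesis by simp
  qed
  show "\<exists>d>0. \<forall>x'\<in>UNIV. dist x' p < d \<longrightarrow> dist (L (G x')) (L (G p)) < e"
  proof (intro exI[of _ \<delta>] conjI ballI impI)
    show "\<delta> > 0" by (rule \<delta>(1))
    fix p' assume "dist p' p < \<delta>"
    then have "\<bar>L (G p') - L (G p)\<bar> \<le> K * e'" using Lb[OF Gc Gc] \<delta>(2) by blast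
    then show "dist (L (G p')) (L (G p)) < e" using Ke by (simp add: dist_real_def)
  qed
qed

locale bvp = odeF +
  fixes A B :: "real \<Rightarrow> real" and MA MB lam :: real
  assumes Abd: "\<And>s. s \<in> {0..1} \<Longrightarrow> \<bar>A s\<bar> \<le> MA"
    and Bbd: "\<And>s. s \<in> {0..1} \<Longrightarrow> \<bar>B s\<bar> \<le> MB"
    and Aint: "A integrable_on {0..1}" and Bint: "B integrable_on {0..1}"
    and Dpos: "1 + integral {0..1} A - integral {0..1} B > 0"
begin

definition "a = integral {0..1} A"
definition "b = integral {0..1} B"
definition "D = 1 + a - b"
definition "LA g = integral {0..1} (\<lambda>s. A s * g s)"
definition "LB g = integral {0..1} (\<lambda>s. B s * g s)"
definition "WI g = integral {0..1} (g :: real \<Rightarrow> real)"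
definition "K1 = (MA + MB + 1) * M / D"
definition "K = K1 + MA * K1 + MA * M"
definition "\<rho> = \<bar>lam\<bar> * K"

lemma MA0: "MA \<ge> 0" using Abd[of 0] by auto
lemma MB0: "MB \<ge> 0" using Bbd[of 0] by auto
lemma D0: "D > 0" using Dpos unfolding D_def a_def b_def by simp
lemma K1_0: "K1 \<ge> 0" unfolding K1_def using MA0 MB0 M0 D0 by simp
lemma K0: "K \<ge> 0" unfolding K_def using K1_0 MA0 M0 by simp
lemma rho0: "\<rho> \<ge> 0" unfolding \<rho>_def using K0 by simp

lemma Abnd: "bounded (A ` {0..1})" unfolding bounded_iff using Abd by (intro exI[of _ MA]) auto
lemma Bbnd: "bounded (B ` {0..1})" unfolding bounded_iff using Bbd by (intro exI[of _ MB]) auto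

lemma a_bound: "\<bar>a\<bar> \<le> MA"
  using int_bound[OF Aint _ Abd] unfolding a_def by simp

lemma L_close:
  fixes C :: "real \<Rightarrow> real"
  assumes Cbd: "\<And>s. s \<in> {0..1} \<Longrightarrow> \<bar>C s\<bar> \<le> MC" and Cbnd: "bounded (C ` {0..1})" and Cint: "C integrable_on {0..1}"
    and "continuous_on {0..1} g1" "continuous_on {0..1} g2" "\<forall>r\<in>{0..1}. \<bar>g1 r - g2 r\<bar> \<le> e"
  shows "\<bar>integral {0..1} (\<lambda>s. C s * g1 s) - integral {0..1} (\<lambda>s. C s * g2 s)\<bar> \<le> MC * e"
proof -
  have i: "(\<lambda>s. C s * g1 s) integrable_on {0..1}" "(\<lambda>s. C s * g2 s) integrable_on {0..1}"
    using prod_int[OF Cbnd Cint] assms(4,5) by auto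
  have "\<bar>integral {0..1} (\<lambda>s. C s * g1 s - C s * g2 s)\<bar> \<le> (MC * e) * (1 - 0)"
  proof (rule int_bound[OF Henstock_Kurzweil_Integration.integrable_diff[OF i]])
    fix s :: real assume s: "s \<in> {0..1}"
    have "\<bar>C s * g1 s - C s * g2 s\<bar> = \<bar>C s\<bar> * \<bar>g1 s - g2 s\<bar>" by (metis abs_mult right_diff_distrib)
    also have "\<dots> \<le> MC * e" using Cbd[OF s] assms(6) s by (intro mult_mono) auto
    finally show "\<bar>C s * g1 s - C s * g2 s\<bar> \<le> MC * e" .
  qed simp
  then show ?thesis using Henstock_Kurzweil_Integration.integral_diff[OF i] by simp
qed

lemma LA_close: "continuous_on {0..1} g1 \<Longrightarrow> continuous_on {0..1} g2 \<Longrightarrow> \<forall>r\<in>{0..1}. \<bar>g1 r - g2 r\<bar> \<le> e \<Longrightarrow>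
   \<bar>LA g1 - LA g2\<bar> \<le> MA * e"
  unfolding LA_def by (rule L_close[OF Abd Abnd Aint])
lemma LB_close: "continuous_on {0..1} g1 \<Longrightarrow> continuous_on {0..1} g2 \<Longrightarrow> \<forall>r\<in>{0..1}. \<bar>g1 r - g2 r\<bar> \<le> e \<Longrightarrow>
   \<bar>LB g1 - LB g2\<bar> \<le> MB * e"
  unfolding LB_def by (rule L_close[OF Bbd Bbnd Bint])
lemma WI_close: "continuous_on {0..1} g1 \<Longrightarrow> continuous_on {0..1} g2 \<Longrightarrow> \<forall>r\<in>{0..1}. \<bar>g1 r - g2 r\<bar> \<le> e \<Longrightarrow>
   \<bar>WI g1 - WI g2\<bar> \<le> 1 * e"
  unfolding WI_def using int_close[of g1 g2 e 1] by auto

lemma LA_zero: "LA (\<lambda>s. 0) = 0" unfolding LA_def by simp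
lemma LB_zero: "LB (\<lambda>s. 0) = 0" unfolding LB_def by simp
lemma WI_zero: "WI (\<lambda>s. 0) = 0" unfolding WI_def by simp

lemma LA_bound: "continuous_on {0..1} g \<Longrightarrow> \<forall>r\<in>{0..1}. \<bar>g r\<bar> \<le> e \<Longrightarrow> \<bar>LA g\<bar> \<le> MA * e"
  using LA_close[of g "\<lambda>s. 0" e] LA_zero by simp
lemma LB_bound: "continuous_on {0..1} g \<Longrightarrow> \<forall>r\<in>{0..1}. \<bar>g r\<bar> \<le> e \<Longrightarrow> \<bar>LB g\<bar> \<le> MB * e"
  using LB_close[of g "\<lambda>s. 0" e] LB_zero by simp
lemma WI_bound: "continuous_on {0..1} g \<Longrightarrow> \<forall>r\<in>{0..1}. \<bar>g r\<bar> \<le> e \<Longrightarrow> \<bar>WI g\<bar> \<le> e"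
  using WI_close[of g "\<lambda>s. 0" e] WI_zero by simp

end


context bvp begin

definition xp :: "real \<Rightarrow> nat \<Rightarrow> real \<times> real \<Rightarrow> real \<Rightarrow> real" where
  "xp h n p = Xit lam h (fst p) (snd p) n"
definition wp :: "real \<Rightarrow> nat \<Rightarrow> real \<times> real \<Rightarrow> real \<Rightarrow> real" where
  "wp h n p = Wop h (xp h n p)"

lemma xp_cont: "h > 0 \<Longrightarrow> continuous_on {0..1} (xp h n p)"
  unfolding xp_def by (rule Xit_cont)

lemma wp_cont: "h > 0 \<Longrightarrow> continuous_on {0..1} (wp h n p)"
  unfolding wp_def by (rule Wop_cont[OF _ xp_cont])

lemma wp_bound: "h > 0 \<Longrightarrow> r \<in> {0..1} \<Longrightarrow> \<bar>wp h n p r\<bar> \<le> M"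
  unfolding wp_def by (rule Wop_bound[OF _ xp_cont])

lemma wp_UC:
  assumes h: "h > 0" and e: "e > 0"
  shows "\<exists>\<delta>>0. \<forall>p'. dist p' p < \<delta> \<longrightarrow> (\<forall>r\<in>{0..1}. \<bar>wp h n p' r - wp h n p r\<bar> \<le> e)"
proof -
  obtain \<eta> where \<eta>: "\<eta> > 0" "\<forall>s\<in>{0..1}. \<forall>u v. \<bar>u - v\<bar> < \<eta> \<longrightarrow> \<bar>F s u - F s v\<bar> < e"
    using Fu[OF e] by blast
  obtain \<delta> where \<delta>: "\<delta> > 0" "\<forall>c' d'. \<bar>c' - fst p\<bar> < \<delta> \<longrightarrow> \<bar>d' - snd p\<bar> < \<delta> \<longrightarrow>
          (\<forall>t\<in>{0..1}. \<bar>Xit lam h c' d' n t - Xit lam h (fst p) (snd p) n t\<bar> < \<eta>)"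
    using Xit_UC[OF h \<eta>(1)] by blast
  show ?thesis
  proof (intro exI[of _ \<delta>] conjI allI impI ballI)
    show "\<delta> > 0" by (rule \<delta>(1))
    fix p' :: "real \<times> real" and r :: real assume d: "dist p' p < \<delta>" and r: "r \<in> {0..1}"
    have "\<bar>fst p' - fst p\<bar> < \<delta>" using dist_fst_le[of p' p] d by (simp add: dist_real_def)
    moreover have "\<bar>snd p' - snd p\<bar> < \<delta>" using dist_snd_le[of p' p] d by (simp add: dist_real_def)
    ultimately have close: "\<bar>xp h n p' t - xp h n p t\<bar> < \<eta>" if "t \<in> {0..1}" for t
      using \<delta>(2) that unfolding xp_def by blast
    have Fclose: "\<bar>F s (xp h n p' (max 0 (s - h))) - F s (xp h n p (max 0 (s - h)))\<bar> \<le> e"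
      if "s \<in> {0..1}" for s
      using \<eta>(2) close[OF sig_in[OF h that]] that by (simp add: less_imp_le)
    show "\<bar>wp h n p' r - wp h n p r\<bar> \<le> e"
      unfolding wp_def by (rule Wop_close[OF h xp_cont[OF h] xp_cont[OF h] Fclose r])
  qed
qed

lemma approx_sol:
  assumes h: "h > 0"
  shows "\<exists>c d. \<bar>c\<bar> \<le> \<rho> \<and> \<bar>d\<bar> \<le> \<rho> \<and> c = a * d + lam * LA (wp h n (c, d)) \<and>
     d * D = lam * (LB (wp h n (c, d)) - LA (wp h n (c, d)) - WI (wp h n (c, d)))"
proof -
  define P where "P p = LA (wp h n p)" for p
  define Q where "Q p = LB (wp h n p)" for p
  define W where "W p = WI (wp h n p)" for p
  define dd where "dd p = lam * (Q p - P p - W p) / D" for p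
  define \<Psi> where "\<Psi> p = (a * dd p + lam * P p, dd p)" for p
  define S where "S = {-\<rho>..\<rho>} \<times> {-\<rho>..\<rho>}"
  have cP: "continuous_on UNIV P" unfolding P_def
    by (rule cont_UC[OF wp_UC[OF h] wp_cont[OF h] LA_close MA0])
  have cQ: "continuous_on UNIV Q" unfolding Q_def
    by (rule cont_UC[OF wp_UC[OF h] wp_cont[OF h] LB_close MB0])
  have cW: "continuous_on UNIV W" unfolding W_def
    by (rule cont_UC[OF wp_UC[OF h] wp_cont[OF h] WI_close zero_le_one])
  have cPsi: "continuous_on S \<Psi>"
    unfolding \<Psi>_def dd_def
    by (rule continuous_on_subset[of UNIV]) (intro continuous_intros cP cQ cW, use D0 in auto)
  have bP: "\<bar>P p\<bar> \<le> MA * M" for p unfolding P_def using LA_bound[OF wp_cont[OF h]] wp_bound[OF h] by blast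
  have bQ: "\<bar>Q p\<bar> \<le> MB * M" for p unfolding Q_def using LB_bound[OF wp_cont[OF h]] wp_bound[OF h] by blast
  have bW: "\<bar>W p\<bar> \<le> M" for p unfolding W_def using WI_bound[OF wp_cont[OF h]] wp_bound[OF h] by blast
  have bdd: "\<bar>dd p\<bar> \<le> \<bar>lam\<bar> * K1" for p
  proof -
    have "\<bar>Q p - P p - W p\<bar> \<le> (MA + MB + 1) * M" using bP[of p] bQ[of p] bW[of p] by (simp add: algebra_simps)
    then have "\<bar>lam\<bar> * \<bar>Q p - P p - W p\<bar> \<le> \<bar>lam\<bar> * ((MA + MB + 1) * M)" by (simp add: mult_left_mono)
    then show ?thesis unfolding dd_def K1_def using D0 by (simp add: abs_mult abs_divide divide_right_mono)
  qed
  have fim: "\<Psi> \<in> S \<rightarrow> S"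
  proof
    fix p assume "p \<in> S"
    have KK: "K1 \<le> K" unfolding K_def using MA0 K1_0 M0 by simp
    have "\<bar>lam\<bar> * K1 \<le> \<bar>lam\<bar> * K" using KK by (simp add: mult_left_mono)
    then have d1: "\<bar>dd p\<bar> \<le> \<rho>" using bdd[of p] unfolding \<rho>_def by linarith
    have "\<bar>a * dd p\<bar> \<le> MA * (\<bar>lam\<bar> * K1)" using a_bound bdd[of p] by (simp add: abs_mult mult_mono MA0)
    moreover have "\<bar>lam * P p\<bar> \<le> \<bar>lam\<bar> * (MA * M)" using bP[of p] by (simp add: abs_mult mult_left_mono)
    moreover have "MA * (\<bar>lam\<bar> * K1) + \<bar>lam\<bar> * (MA * M) = \<bar>lam\<bar> * (MA * K1 + MA * M)"
      by (simp add: algebra_simps)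
    moreover have "\<bar>lam\<bar> * (MA * K1 + MA * M) \<le> \<bar>lam\<bar> * K"
      by (intro mult_left_mono) (auto simp: K_def K1_0)
    ultimately have "\<bar>a * dd p + lam * P p\<bar> \<le> \<rho>" unfolding \<rho>_def
      using abs_triangle_ineq[of "a * dd p" "lam * P p"] by linarith
    then show "\<Psi> p \<in> S" using d1 unfolding \<Psi>_def S_def by auto
  qed
  have S: "compact S" "convex S" "S \<noteq> {}" unfolding S_def using rho0
    by (auto intro!: compact_Times convex_Times)
  obtain p where p: "p \<in> S" "\<Psi> p = p" using brouwer[OF S cPsi fim] by blast
  obtain c d where cd: "p = (c, d)" by (cases p)
  have c: "c = a * d + lam * P (c, d)" and d: "d = dd (c, d)" using p(2) cd unfolding \<Psi>_def by auto
  have "d * D = lam * (Q (c, d) - P (c, d) - W (c, d))" using d D0 unfolding dd_def by (simp add: field_simps)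
  moreover have "\<bar>c\<bar> \<le> \<rho>" "\<bar>d\<bar> \<le> \<rho>" using p(1) cd unfolding S_def by auto
  ultimately show ?thesis using c unfolding P_def Q_def W_def by blast
qed

end


context bvp begin

lemma xp_fixed:
  assumes "h > 0" "real n * h \<ge> 1" "t \<in> {0..1}"
  shows "xp h n p t = fst p + snd p * t + lam * integral {0..t} (wp h n p)"
  using Xit_fixed[OF assms, of lam "fst p" "snd p"] unfolding xp_def wp_def Tstep_def by simp

lemma xp_lip:
  assumes h: "h > 0" and n: "real n * h \<ge> 1" and t: "t \<in> {0..1}" and t': "t' \<in> {0..1}"
  shows "\<bar>xp h n p t - xp h n p t'\<bar> \<le> (\<bar>snd p\<bar> + \<bar>lam\<bar> * M) * \<bar>t - t'\<bar>"
  using Tstep_lip[OF h Xit_cont[OF h, of lam "fst p" "snd p" n] t' t, of lam "fst p" "snd p"]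
    Xit_fixed[OF h n t, of lam "fst p" "snd p"] Xit_fixed[OF h n t', of lam "fst p" "snd p"]
  unfolding xp_def by simp

lemma xp_bound:
  assumes h: "h > 0" and n: "real n * h \<ge> 1" and t: "t \<in> {0..1}"
  shows "\<bar>xp h n p t\<bar> \<le> \<bar>fst p\<bar> + \<bar>snd p\<bar> + \<bar>lam\<bar> * M"
proof -
  have "\<bar>integral {0..t} (wp h n p)\<bar> \<le> M * (t - 0)"
    by (rule int_bound) (use integrable_subinterval_real[OF integrable_continuous_real[OF wp_cont[OF h]]] t wp_bound[OF h] in auto)
  then have I: "\<bar>integral {0..t} (wp h n p)\<bar> \<le> M" using t M0 by (smt (verit) atLeastAtMost_iff mult_left_le)
  have "\<bar>snd p * t\<bar> \<le> \<bar>snd p\<bar>" using t by (simp add: abs_mult mult_left_le)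
  moreover have "\<bar>lam * integral {0..t} (wp h n p)\<bar> \<le> \<bar>lam\<bar> * M" using I by (simp add: abs_mult mult_left_mono)
  ultimately show ?thesis using xp_fixed[OF assms, of p]
    by (smt (verit) abs_triangle_ineq)
qed

end

lemma unif_to_lim:
  fixes u :: "nat \<Rightarrow> real"
  assumes "\<And>e. e > 0 \<Longrightarrow> \<exists>N. \<forall>m\<ge>N. \<bar>u m - L\<bar> \<le> K * e" "K \<ge> 0"
  shows "u \<longlonglongrightarrow> L"
proof (rule LIMSEQ_I)
  fix r :: real assume r: "r > 0"
  define e where "e = r / (2 * (K + 1))"
  have e: "e > 0" using r assms(2) unfolding e_def by simp
  have Ke: "K * e < r"
  proof -
    have "K * e = r / 2 * (K / (K + 1))" unfolding e_def using assms(2) by (simp add: field_simps)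
    also have "\<dots> \<le> r / 2" using r assms(2) by (intro mult_left_le) auto
    finally show ?thesis using r by simp
  qed
  obtain N where "\<forall>m\<ge>N. \<bar>u m - L\<bar> \<le> K * e" using assms(1)[OF e] by blast
  then show "\<exists>no. \<forall>n\<ge>no. norm (u n - L) < r" using Ke by force
qed


context bvp begin

lemma limit_solution:
  obtains c d g where "\<bar>c\<bar> \<le> \<rho>" "\<bar>d\<bar> \<le> \<rho>" "continuous_on {0..1} g"
    "\<And>t. t \<in> {0..1} \<Longrightarrow> g t = c + d * t + lam * integral {0..t} (\<lambda>r. - integral {0..r} (\<lambda>s. F s (g s)))"
    "c = a * d + lam * LA (\<lambda>r. - integral {0..r} (\<lambda>s. F s (g s)))"
    "d * D = lam * (LB (\<lambda>r. - integral {0..r} (\<lambda>s. F s (g s))) - LA (\<lambda>r. - integral {0..r} (\<lambda>s. F s (g s)))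
        - WI (\<lambda>r. - integral {0..r} (\<lambda>s. F s (g s))))"
proof -
  define hh where "hh m = 1 / real (Suc m)" for m :: nat
  have hh: "hh m > 0" "real (Suc m) * hh m \<ge> 1" for m unfolding hh_def by auto
  have "\<forall>m. \<exists>p. \<bar>fst p\<bar> \<le> \<rho> \<and> \<bar>snd p\<bar> \<le> \<rho> \<and>
     fst p = a * snd p + lam * LA (wp (hh m) (Suc m) p) \<and>
     snd p * D = lam * (LB (wp (hh m) (Suc m) p) - LA (wp (hh m) (Suc m) p) - WI (wp (hh m) (Suc m) p))"
  proof
    fix m
    obtain c d where "\<bar>c\<bar> \<le> \<rho> \<and> \<bar>d\<bar> \<le> \<rho> \<and> c = a * d + lam * LA (wp (hh m) (Suc m) (c, d)) \<and>
     d * D = lam * (LB (wp (hh m) (Suc m) (c, d)) - LA (wp (hh m) (Suc m) (c, d)) - WI (wp (hh m) (Suc m) (c, d)))"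
      using approx_sol[OF hh(1)] by blast
    then show "\<exists>p. \<bar>fst p\<bar> \<le> \<rho> \<and> \<bar>snd p\<bar> \<le> \<rho> \<and>
     fst p = a * snd p + lam * LA (wp (hh m) (Suc m) p) \<and>
     snd p * D = lam * (LB (wp (hh m) (Suc m) p) - LA (wp (hh m) (Suc m) p) - WI (wp (hh m) (Suc m) p))"
      by (intro exI[of _ "(c, d)"]) simp
  qed
  then obtain pp where pp: "\<And>m. \<bar>fst (pp m)\<bar> \<le> \<rho> \<and> \<bar>snd (pp m)\<bar> \<le> \<rho> \<and>
     fst (pp m) = a * snd (pp m) + lam * LA (wp (hh m) (Suc m) (pp m)) \<and>
     snd (pp m) * D = lam * (LB (wp (hh m) (Suc m) (pp m)) - LA (wp (hh m) (Suc m) (pp m)) - WI (wp (hh m) (Suc m) (pp m)))"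
    using choice[of "\<lambda>m p. \<bar>fst p\<bar> \<le> \<rho> \<and> \<bar>snd p\<bar> \<le> \<rho> \<and>
     fst p = a * snd p + lam * LA (wp (hh m) (Suc m) p) \<and>
     snd p * D = lam * (LB (wp (hh m) (Suc m) p) - LA (wp (hh m) (Suc m) p) - WI (wp (hh m) (Suc m) p))"] by blast
  define xm where "xm m = xp (hh m) (Suc m) (pp m)" for m
  define wm where "wm m = wp (hh m) (Suc m) (pp m)" for m
  define L where "L = \<rho> + \<bar>lam\<bar> * M"
  define Bx where "Bx = 2 * \<rho> + \<bar>lam\<bar> * M"
  have L0: "L \<ge> 0" unfolding L_def using rho0 M0 by simp
  have xm_cont: "continuous_on {0..1} (xm m)" for m unfolding xm_def using xp_cont[OF hh(1)] .
  have wm_cont: "continuous_on {0..1} (wm m)" for m unfolding wm_def using wp_cont[OF hh(1)] .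
  have xm_fix: "xm m t = fst (pp m) + snd (pp m) * t + lam * integral {0..t} (wm m)" if "t \<in> {0..1}" for m t
    unfolding xm_def wm_def using xp_fixed[OF hh that] .
  have xm_lip: "\<bar>xm m t - xm m t'\<bar> \<le> L * \<bar>t - t'\<bar>" if "t \<in> {0..1}" "t' \<in> {0..1}" for m t t'
  proof -
    have "\<bar>xm m t - xm m t'\<bar> \<le> (\<bar>snd (pp m)\<bar> + \<bar>lam\<bar> * M) * \<bar>t - t'\<bar>"
      unfolding xm_def using xp_lip[OF hh that] .
    also have "\<dots> \<le> L * \<bar>t - t'\<bar>" unfolding L_def using pp[of m] by (intro mult_right_mono) auto
    finally show ?thesis .
  qed
  have xm_bd: "\<bar>xm m t\<bar> \<le> Bx" if "t \<in> {0..1}" for m t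
    using xp_bound[OF hh(1)[of m] hh(2)[of m] that, where p="pp m"] pp[of m] unfolding xm_def Bx_def by linarith
  define S where "S = {-\<rho>..\<rho>} \<times> {-\<rho>..\<rho>}"
  have ppb: "\<bar>fst (pp m)\<bar> \<le> \<rho>" "\<bar>snd (pp m)\<bar> \<le> \<rho>" for m using pp[of m] by blast+
  have ppS: "\<forall>m. pp m \<in> S"
  proof
    fix m show "pp m \<in> S" using ppb[of m] unfolding S_def mem_Times_iff by (simp add: abs_le_iff)
  qed
  obtain l r1 where l: "l \<in> S" "strict_mono r1" "(pp \<circ> r1) \<longlonglongrightarrow> l"
    using seq_compactE[OF compact_imp_seq_compact ppS] unfolding S_def
    by (metis compact_Icc compact_Times)
  obtain g k where g: "continuous_on {0..1} g" "strict_mono (k :: nat \<Rightarrow> nat)"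
    "\<And>e. 0 < e \<Longrightarrow> \<exists>N. \<forall>n x. n \<ge> N \<and> x \<in> {0..1} \<longrightarrow> norm (xm (r1 (k n)) x - g x) < e"
  proof (rule Arzela_Ascoli[of "{0..1}" "\<lambda>m. xm (r1 m)" Bx])
    show "compact {0..1::real}" by simp
    show "norm (xm (r1 n) x) \<le> Bx" if "x \<in> {0..1}" for n x using xm_bd[OF that] by simp
    fix x :: real and e :: real assume x: "x \<in> {0..1}" and e: "0 < e"
    show "\<exists>d>0. \<forall>n y. y \<in> {0..1} \<and> norm (x - y) < d \<longrightarrow> norm (xm (r1 n) x - xm (r1 n) y) < e"
    proof (intro exI[of _ "e / (L + 1)"] conjI allI impI)
      show "e / (L + 1) > 0" using e L0 by simp
      fix n y assume y: "y \<in> {0..1} \<and> norm (x - y) < e / (L + 1)"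
      have "\<bar>xm (r1 n) x - xm (r1 n) y\<bar> \<le> L * \<bar>x - y\<bar>" using xm_lip x y by blast
      also have "\<dots> \<le> L * (e / (L + 1))" using y L0 by (intro mult_left_mono) auto
      also have "\<dots> < e"
      proof -
        have "L * (e / (L + 1)) = e * (L / (L + 1))" by simp
        also have "\<dots> < e * 1" using e L0 by (intro mult_strict_left_mono) auto
        finally show ?thesis by simp
      qed
      finally show "norm (xm (r1 n) x - xm (r1 n) y) < e" by simp
    qed
  next
    fix g k assume "continuous_on {0..1} g" "strict_mono (k :: nat \<Rightarrow> nat)"
      "\<And>e. 0 < e \<Longrightarrow> \<exists>N. \<forall>n x. n \<ge> N \<and> x \<in> {0..1} \<longrightarrow> norm (xm (r1 (k n)) x - g x) < e"
    then show thesis using that by blast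
  qed
  define r where "r = r1 \<circ> k"
  have r: "strict_mono r" unfolding r_def using l(2) g(2) by (rule strict_mono_o)
  have ppr: "(\<lambda>m. pp (r m)) \<longlonglongrightarrow> l"
    using LIMSEQ_subseq_LIMSEQ[OF l(3) g(2)] unfolding r_def by (simp add: o_def)
  define c where "c = fst l"
  define d where "d = snd l"
  have cs: "(\<lambda>m. fst (pp (r m))) \<longlonglongrightarrow> c" unfolding c_def using tendsto_fst[OF ppr] .
  have ds: "(\<lambda>m. snd (pp (r m))) \<longlonglongrightarrow> d" unfolding d_def using tendsto_snd[OF ppr] .
  have guni: "\<And>e. 0 < e \<Longrightarrow> \<exists>N. \<forall>n x. n \<ge> N \<and> x \<in> {0..1} \<longrightarrow> \<bar>xm (r n) x - g x\<bar> < e"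
    using g(3) unfolding r_def by simp
  define w where "w r' = - integral {0..r'} (\<lambda>s. F s (g s))" for r'
  have Fg_cont: "continuous_on {0..1} (\<lambda>s. F s (g s))" using Fc[OF g(1)] .
  have w_cont: "continuous_on {0..1} w" unfolding w_def using int_cont[OF Fg_cont] by (intro continuous_intros)
  have wm_eq: "wm m = Wop (hh m) (xm m)" for m unfolding wm_def xm_def wp_def ..
  have UW: "\<exists>N. \<forall>m\<ge>N. \<forall>t\<in>{0..1}. \<bar>wm (r m) t - w t\<bar> \<le> e" if e: "e > 0" for e
  proof -
    obtain \<eta> where \<eta>: "\<eta> > 0" "\<forall>s\<in>{0..1}. \<forall>u v. \<bar>u - v\<bar> < \<eta> \<longrightarrow> \<bar>F s u - F s v\<bar> < e"
      using Fu[OF e] by blast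
    have uc: "uniformly_continuous_on {0..1} g" using compact_uniformly_continuous[OF g(1) compact_Icc] .
    obtain \<delta> where \<delta>: "\<delta> > 0" "\<And>x x'. x \<in> {0..1} \<Longrightarrow> x' \<in> {0..1} \<Longrightarrow> dist x' x < \<delta> \<Longrightarrow> dist (g x') (g x) < \<eta>/2"
      using uc[unfolded uniformly_continuous_on_def, rule_format, of "\<eta>/2"] \<eta>(1) by (metis half_gt_zero)
    obtain N1 where N1: "\<forall>n x. n \<ge> N1 \<and> x \<in> {0..1} \<longrightarrow> \<bar>xm (r n) x - g x\<bar> < \<eta>/2"
      using guni[of "\<eta>/2"] \<eta>(1) by auto
    obtain N2 where N2: "inverse (real (Suc N2)) < \<delta>" using reals_Archimedean[OF \<delta>(1)] by blast
    show ?thesis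
    proof (intro exI[of _ "max N1 N2"] allI impI ballI)
      fix m t assume m: "max N1 N2 \<le> m" and t: "t \<in> {0..1::real}"
      have rm: "m \<le> r m" using seq_suble[OF r] .
      have "hh (r m) \<le> inverse (real (Suc N2))" unfolding hh_def using m rm
        by (simp add: divide_inverse le_imp_inverse_le)
      then have hs: "hh (r m) < \<delta>" using N2 by linarith
      have Fcl: "\<bar>F s (xm (r m) (max 0 (s - hh (r m)))) - F s (g s)\<bar> \<le> e" if s: "s \<in> {0..1}" for s
      proof -
        define \<sigma> where "\<sigma> = max 0 (s - hh (r m))"
        have \<sigma>01: "\<sigma> \<in> {0..1}" unfolding \<sigma>_def using sig_in[OF hh(1) s] .
        have "\<bar>\<sigma> - s\<bar> \<le> hh (r m)" unfolding \<sigma>_def using s hh(1)[of "r m"] by auto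
        then have "dist \<sigma> s < \<delta>" using hs by (simp add: dist_real_def)
        then have a1: "\<bar>g \<sigma> - g s\<bar> < \<eta>/2" using \<delta>(2)[OF s \<sigma>01] by (simp add: dist_real_def)
        have a2: "\<bar>xm (r m) \<sigma> - g \<sigma>\<bar> < \<eta>/2" using N1 m \<sigma>01 by auto
        have "\<bar>xm (r m) \<sigma> - g s\<bar> < \<eta>" using a1 a2 by linarith
        then show ?thesis using \<eta>(2) s unfolding \<sigma>_def by (simp add: less_imp_le)
      qed
      have "\<bar>integral {0..t} (\<lambda>s. F s (xm (r m) (max 0 (s - hh (r m))))) - integral {0..t} (\<lambda>s. F s (g s))\<bar> \<le> e"
        by (rule int_close[OF integrand_cont[OF hh(1) xm_cont] Fg_cont Fcl t])
      then show "\<bar>wm (r m) t - w t\<bar> \<le> e" unfolding wm_eq Wop_def w_def by (simp add: abs_minus_commute)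
    qed
  qed
  have LAlim: "(\<lambda>m. LA (wm (r m))) \<longlonglongrightarrow> LA w"
  proof (rule unif_to_lim[OF _ MA0])
    fix e :: real assume "e > 0"
    then obtain N where N: "\<forall>m\<ge>N. \<forall>t\<in>{0..1}. \<bar>wm (r m) t - w t\<bar> \<le> e" using UW by blast
    show "\<exists>N. \<forall>m\<ge>N. \<bar>LA (wm (r m)) - LA w\<bar> \<le> MA * e"
      using LA_close[OF wm_cont w_cont] N by blast
  qed
  have LBlim: "(\<lambda>m. LB (wm (r m))) \<longlonglongrightarrow> LB w"
  proof (rule unif_to_lim[OF _ MB0])
    fix e :: real assume "e > 0"
    then obtain N where N: "\<forall>m\<ge>N. \<forall>t\<in>{0..1}. \<bar>wm (r m) t - w t\<bar> \<le> e" using UW by blast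
    show "\<exists>N. \<forall>m\<ge>N. \<bar>LB (wm (r m)) - LB w\<bar> \<le> MB * e"
      using LB_close[OF wm_cont w_cont] N by blast
  qed
  have WIlim: "(\<lambda>m. WI (wm (r m))) \<longlonglongrightarrow> WI w"
  proof (rule unif_to_lim[OF _ zero_le_one])
    fix e :: real assume "e > 0"
    then obtain N where N: "\<forall>m\<ge>N. \<forall>t\<in>{0..1}. \<bar>wm (r m) t - w t\<bar> \<le> e" using UW by blast
    show "\<exists>N. \<forall>m\<ge>N. \<bar>WI (wm (r m)) - WI w\<bar> \<le> 1 * e"
      using WI_close[OF wm_cont w_cont] N by blast
  qed
  have eq1: "c = a * d + lam * LA w"
  proof -
    have "(\<lambda>m. a * snd (pp (r m)) + lam * LA (wm (r m))) \<longlonglongrightarrow> a * d + lam * LA w"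
      by (intro tendsto_intros ds LAlim)
    moreover have "(\<lambda>m. a * snd (pp (r m)) + lam * LA (wm (r m))) = (\<lambda>m. fst (pp (r m)))"
      using pp unfolding wm_def by metis
    ultimately show ?thesis using LIMSEQ_unique cs by metis
  qed
  have eq2: "d * D = lam * (LB w - LA w - WI w)"
  proof -
    have "(\<lambda>m. lam * (LB (wm (r m)) - LA (wm (r m)) - WI (wm (r m)))) \<longlonglongrightarrow> lam * (LB w - LA w - WI w)"
      by (intro tendsto_intros LAlim LBlim WIlim)
    moreover have "(\<lambda>m. lam * (LB (wm (r m)) - LA (wm (r m)) - WI (wm (r m)))) = (\<lambda>m. snd (pp (r m)) * D)"
      using pp unfolding wm_def by metis
    moreover have "(\<lambda>m. snd (pp (r m)) * D) \<longlonglongrightarrow> d * D" by (intro tendsto_intros ds)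
    ultimately show ?thesis using LIMSEQ_unique by metis
  qed
  have gform: "g t = c + d * t + lam * integral {0..t} w" if t: "t \<in> {0..1}" for t
  proof -
    have Ilim: "(\<lambda>m. integral {0..t} (wm (r m))) \<longlonglongrightarrow> integral {0..t} w"
    proof (rule unif_to_lim[OF _ zero_le_one])
      fix e :: real assume "e > 0"
      then obtain N where N: "\<forall>m\<ge>N. \<forall>t\<in>{0..1}. \<bar>wm (r m) t - w t\<bar> \<le> e" using UW by blast
      show "\<exists>N. \<forall>m\<ge>N. \<bar>integral {0..t} (wm (r m)) - integral {0..t} w\<bar> \<le> 1 * e"
      proof (intro exI[of _ N] allI impI)
        fix m assume "m \<ge> N"
        then have "\<forall>s\<in>{0..1}. \<bar>wm (r m) s - w s\<bar> \<le> e" using N by blast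
        then show "\<bar>integral {0..t} (wm (r m)) - integral {0..t} w\<bar> \<le> 1 * e"
          using int_close[OF wm_cont w_cont _ t, of "r m" e] by simp
      qed
    qed
    have "(\<lambda>m. fst (pp (r m)) + snd (pp (r m)) * t + lam * integral {0..t} (wm (r m))) \<longlonglongrightarrow> c + d * t + lam * integral {0..t} w"
      by (intro tendsto_intros cs ds Ilim)
    moreover have "(\<lambda>m. fst (pp (r m)) + snd (pp (r m)) * t + lam * integral {0..t} (wm (r m))) = (\<lambda>m. xm (r m) t)"
      using xm_fix[OF t] by simp
    moreover have "(\<lambda>m. xm (r m) t) \<longlonglongrightarrow> g t"
    proof (rule LIMSEQ_I)
      fix e :: real assume "e > 0"
      then obtain N where "\<forall>n x. n \<ge> N \<and> x \<in> {0..1} \<longrightarrow> \<bar>xm (r n) x - g x\<bar> < e" using guni by blast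
      then show "\<exists>no. \<forall>n\<ge>no. norm (xm (r n) t - g t) < e" using t by auto
    qed
    ultimately show ?thesis using LIMSEQ_unique by metis
  qed
  have cb: "\<bar>c\<bar> \<le> \<rho>" by (rule LIMSEQ_le_const2[OF tendsto_rabs[OF cs]]) (use ppb in auto)
  have db: "\<bar>d\<bar> \<le> \<rho>" by (rule LIMSEQ_le_const2[OF tendsto_rabs[OF ds]]) (use ppb in auto)
  show thesis
    using that[of c d g] cb db g(1) gform eq1 eq2 unfolding w_def[abs_def] by blast
qed

end


theorem theorem4p16:
  fixes f :: "real \<Rightarrow> real \<Rightarrow> real" and A B :: "real \<Rightarrow> real"
  assumes "continuous_on ({0..1} \<times> UNIV) (\<lambda>(t, y). f t y)"
    and "Omega_hat01 A" and "Omega_hat01 B"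
    and "\<bar>integral {0..1} (\<lambda>s. A s - B s)\<bar> < 1"
  shows "\<exists>lam0>0. \<forall>lam::real. \<bar>lam\<bar> \<le> lam0 \<longrightarrow> (\<exists>x. is_solution f lam A B x)"
proof -
  note fc = assms(1) and hA = assms(2) and hB = assms(3) and hint = assms(4)
  define cl where "cl y = max (-1) (min 1 y)" for y :: real
  have cl_in: "cl y \<in> {-1..1}" for y unfolding cl_def by auto
  have cl_id: "\<bar>y\<bar> \<le> 1 \<Longrightarrow> cl y = y" for y unfolding cl_def by auto
  have cl_lip: "\<bar>cl u - cl v\<bar> \<le> \<bar>u - v\<bar>" for u v unfolding cl_def by auto
  define fp where "fp = (\<lambda>(t, y). f t y)"
  define K0 where "K0 = {0..1::real} \<times> {-1..1::real}"
  have K0c: "compact K0" unfolding K0_def by (intro compact_Times compact_Icc)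
  have fpc: "continuous_on K0 fp" unfolding fp_def K0_def by (rule continuous_on_subset[OF fc]) auto
  have "bounded (fp ` K0)" using compact_continuous_image[OF fpc K0c] compact_imp_bounded by blast
  then obtain M where M: "\<And>p. p \<in> K0 \<Longrightarrow> \<bar>fp p\<bar> \<le> M" unfolding bounded_iff by auto
  define F where "F t y = f t (cl y)" for t y
  have Fp: "F t y = fp (t, cl y)" for t y unfolding F_def fp_def by simp
  interpret odeF F M
  proof
    fix y :: "real \<Rightarrow> real" assume y: "continuous_on {0..1} y"
    have "continuous_on {0..1} (\<lambda>s. fp (s, cl (y s)))"
    proof (rule continuous_on_compose2[OF fpc])
      show "continuous_on {0..1} (\<lambda>s. (s, cl (y s)))" unfolding cl_def by (intro continuous_intros y)
      show "(\<lambda>s. (s, cl (y s))) ` {0..1} \<subseteq> K0" unfolding K0_def using cl_in by auto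
    qed
    then show "continuous_on {0..1} (\<lambda>s. F s (y s))" unfolding Fp .
  next
    fix s u :: real assume "s \<in> {0..1}"
    then show "\<bar>F s u\<bar> \<le> M" unfolding Fp using M cl_in unfolding K0_def by auto
  next
    fix e :: real assume e: "e > 0"
    have uc: "uniformly_continuous_on K0 fp" using compact_uniformly_continuous[OF fpc K0c] .
    obtain \<delta> where \<delta>: "\<delta> > 0" "\<And>x x'. x \<in> K0 \<Longrightarrow> x' \<in> K0 \<Longrightarrow> dist x' x < \<delta> \<Longrightarrow> dist (fp x') (fp x) < e"
      using uc[unfolded uniformly_continuous_on_def, rule_format, OF e] by metis
    show "\<exists>\<eta>>0. \<forall>s\<in>{0..1}. \<forall>u v. \<bar>u - v\<bar> < \<eta> \<longrightarrow> \<bar>F s u - F s v\<bar> < e"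
    proof (intro exI[of _ \<delta>] conjI ballI allI impI)
      show "\<delta> > 0" by (rule \<delta>(1))
      fix s u v :: real assume s: "s \<in> {0..1}" and uv: "\<bar>u - v\<bar> < \<delta>"
      have "dist (s, cl u) (s, cl v) < \<delta>" using cl_lip[of u v] uv by (simp add: dist_Pair_Pair dist_real_def)
      then have "dist (fp (s, cl u)) (fp (s, cl v)) < e"
        using \<delta>(2) s cl_in unfolding K0_def by auto
      then show "\<bar>F s u - F s v\<bar> < e" unfolding Fp by (simp add: dist_real_def)
    qed
  qed
  have bA: "bounded (A ` {0..1})" by (rule bounded_hat[OF hA])
  have bB: "bounded (B ` {0..1})" by (rule bounded_hat[OF hB])
  obtain MA where MA': "\<forall>x\<in>A ` {0..1}. norm x \<le> MA" using bA unfolding bounded_iff by blast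
  have MA: "\<And>s. s \<in> {0..1} \<Longrightarrow> \<bar>A s\<bar> \<le> MA" using MA' by auto
  obtain MB where MB': "\<forall>x\<in>B ` {0..1}. norm x \<le> MB" using bB unfolding bounded_iff by blast
  have MB: "\<And>s. s \<in> {0..1} \<Longrightarrow> \<bar>B s\<bar> \<le> MB" using MB' by auto
  have MA0: "MA \<ge> 0" using MA[of 0] by auto
  have MB0: "MB \<ge> 0" using MB[of 0] by auto
  have Aint: "A integrable_on {0..1}" by (rule DEC_integrable[OF DEC_hat[OF hA]])
  have Bint: "B integrable_on {0..1}" by (rule DEC_integrable[OF DEC_hat[OF hB]])
  have oA: "OSC A" by (rule DEC_OSC[OF DEC_hat[OF hA]])
  have oB: "OSC B" by (rule DEC_OSC[OF DEC_hat[OF hB]])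
  define Dc where "Dc = 1 + integral {0..1} A - integral {0..1} B"
  have Dpos: "1 + integral {0..1} A - integral {0..1} B > 0"
    using hint Henstock_Kurzweil_Integration.integral_diff[OF Aint Bint] by linarith
  then have Dc0: "Dc > 0" unfolding Dc_def .
  define K1c where "K1c = (MA + MB + 1) * M / Dc"
  define Kc where "Kc = K1c + MA * K1c + MA * M"
  have K1c0: "K1c \<ge> 0" unfolding K1c_def using MA0 MB0 M0 Dc0 by simp
  have Kc0: "Kc \<ge> 0" unfolding Kc_def using K1c0 MA0 M0 by simp
  define lam0 where "lam0 = 1 / (2 * Kc + M + 1)"
  have lam00: "lam0 > 0" unfolding lam0_def using Kc0 M0 by simp
  show ?thesis
  proof (intro exI[of _ lam0] conjI allI impI)
    show "lam0 > 0" by (rule lam00)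
    fix lam :: real assume hl: "\<bar>lam\<bar> \<le> lam0"
    interpret B: bvp F M A B MA MB lam
      by unfold_locales (use MA MB Aint Bint Dpos in auto)
    have Keq: "B.K = Kc" unfolding B.K_def B.K1_def B.D_def B.a_def B.b_def Kc_def K1c_def Dc_def ..
    have small: "\<bar>lam\<bar> * (2 * Kc + M) \<le> 1"
    proof -
      have "\<bar>lam\<bar> * (2 * Kc + M) \<le> lam0 * (2 * Kc + M)" using hl Kc0 M0 by (intro mult_right_mono) auto
      also have "\<dots> \<le> 1" unfolding lam0_def using Kc0 M0 by (simp add: field_simps)
      finally show ?thesis .
    qed
    obtain c d g where cb: "\<bar>c\<bar> \<le> B.\<rho>" and db: "\<bar>d\<bar> \<le> B.\<rho>" and gc: "continuous_on {0..1} g"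
      and gform: "\<And>t. t \<in> {0..1} \<Longrightarrow> g t = c + d * t + lam * integral {0..t} (\<lambda>r. - integral {0..r} (\<lambda>s. F s (g s)))"
      and eq1: "c = B.a * d + lam * B.LA (\<lambda>r. - integral {0..r} (\<lambda>s. F s (g s)))"
      and eq2: "d * B.D = lam * (B.LB (\<lambda>r. - integral {0..r} (\<lambda>s. F s (g s))) - B.LA (\<lambda>r. - integral {0..r} (\<lambda>s. F s (g s)))
        - B.WI (\<lambda>r. - integral {0..r} (\<lambda>s. F s (g s))))"
      using B.limit_solution by blast
    define w where "w r = - integral {0..r} (\<lambda>s. F s (g s))" for r
    have w_eta: "(\<lambda>r. - integral {0..r} (\<lambda>s. F s (g s))) = w" unfolding w_def ..
    define X where "X t = c + d * t + lam * integral {0..t} w" for t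
    have Fg_cont: "continuous_on {0..1} (\<lambda>s. F s (g s))" using Fc[OF gc] .
    have w_cont: "continuous_on {0..1} w" unfolding w_def using int_cont[OF Fg_cont] by (intro continuous_intros)
    have w_bd: "\<bar>w r\<bar> \<le> M" if "r \<in> {0..1}" for r
    proof -
      have "\<bar>integral {0..r} (\<lambda>s. F s (g s))\<bar> \<le> M * (r - 0)"
        by (rule int_bound) (use integrable_subinterval_real[OF integrable_continuous_real[OF Fg_cont]] that Fb in auto)
      then show ?thesis unfolding w_def using that M0 by (smt (verit) atLeastAtMost_iff mult_left_le)
    qed
    have gX: "g t = X t" if "t \<in> {0..1}" for t using gform[OF that] unfolding X_def w_eta .
    have Xb: "\<bar>X t\<bar> \<le> 1" if t: "t \<in> {0..1}" for t
    proof -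
      have "\<bar>integral {0..t} w\<bar> \<le> M * (t - 0)"
        by (rule int_bound) (use integrable_subinterval_real[OF integrable_continuous_real[OF w_cont]] t w_bd in auto)
      then have I: "\<bar>integral {0..t} w\<bar> \<le> M" using t M0 by (smt (verit) atLeastAtMost_iff mult_left_le)
      have "\<bar>d * t\<bar> \<le> \<bar>d\<bar>" using t by (simp add: abs_mult mult_left_le)
      moreover have "\<bar>lam * integral {0..t} w\<bar> \<le> \<bar>lam\<bar> * M" using I by (simp add: abs_mult mult_left_mono)
      ultimately have "\<bar>X t\<bar> \<le> \<bar>c\<bar> + \<bar>d\<bar> + \<bar>lam\<bar> * M" unfolding X_def by (smt (verit) abs_triangle_ineq)
      also have "\<dots> \<le> \<bar>lam\<bar> * (2 * Kc + M)" using cb db unfolding B.\<rho>_def Keq by (simp add: algebra_simps)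
      finally show ?thesis using small by linarith
    qed
    have FX: "F t (g t) = f t (X t)" if "t \<in> {0..1}" for t
      unfolding F_def gX[OF that] cl_id[OF Xb[OF that]] ..
    define x' where "x' t = d + lam * w t" for t
    define x'' where "x'' t = - lam * F t (g t)" for t
    have Xfun: "X = (\<lambda>t. c + d * t + lam * integral {0..t} w)" unfolding X_def[abs_def] ..
    have x'fun: "x' = (\<lambda>t. d + lam * (- integral {0..t} (\<lambda>s. F s (g s))))" unfolding x'_def[abs_def] w_def ..
    have dX: "(X has_real_derivative x' t) (at t within {0..1})" if t: "t \<in> {0..1}" for t
    proof -
      have I: "((\<lambda>u. integral {0..u} w) has_real_derivative w t) (at t within {0..1})"
        by (rule integral_has_real_derivative[OF w_cont t])
      have "((\<lambda>t. c + d * t + lam * integral {0..t} w) has_real_derivative (0 + d + lam * w t)) (at t within {0..1})"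
        by (rule DERIV_add[OF DERIV_add[OF DERIV_const DERIV_cmult_Id] DERIV_cmult[OF I]])
      then have "((\<lambda>t. c + d * t + lam * integral {0..t} w) has_real_derivative (d + lam * w t)) (at t within {0..1})"
        by simp
      then show ?thesis unfolding Xfun x'_def .
    qed
    have dx': "(x' has_real_derivative x'' t) (at t within {0..1})" if t: "t \<in> {0..1}" for t
    proof -
      have I: "((\<lambda>u. integral {0..u} (\<lambda>s. F s (g s))) has_real_derivative F t (g t)) (at t within {0..1})"
        by (rule integral_has_real_derivative[OF Fg_cont t])
      have "((\<lambda>t. d + lam * (- integral {0..t} (\<lambda>s. F s (g s)))) has_real_derivative (0 + lam * (- F t (g t)))) (at t within {0..1})"
        by (rule DERIV_add[OF DERIV_const DERIV_cmult[OF DERIV_minus[OF I]]])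
      then have "((\<lambda>t. d + lam * (- integral {0..t} (\<lambda>s. F s (g s)))) has_real_derivative (- lam * F t (g t))) (at t within {0..1})"
        by simp
      then show ?thesis unfolding x'fun x''_def .
    qed
    have x''c: "continuous_on {0..1} x''" unfolding x''_def[abs_def] using Fg_cont by (intro continuous_intros)
    have x'c: "continuous_on {0..1} x'" unfolding x'_def[abs_def] using w_cont by (intro continuous_intros)
    have x''eq: "x'' t = - lam * f t (X t)" if "t \<in> {0..1}" for t unfolding x''_def FX[OF that] ..
    have X0: "X 0 = c" unfolding X_def by simp
    have X1: "X 1 = c + d + lam * B.WI w" unfolding X_def B.WI_def by simp
    have wint: "(\<lambda>s. A s * w s) integrable_on {0..1}" by (rule prod_int[OF bA Aint w_cont])
    have wintB: "(\<lambda>s. B s * w s) integrable_on {0..1}" by (rule prod_int[OF bB Bint w_cont])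
    have LAx: "integral {0..1} (\<lambda>s. A s * x' s) = d * B.a + lam * B.LA w"
    proof -
      have fe: "(\<lambda>s. A s * x' s) = (\<lambda>s. d * A s + lam * (A s * w s))"
        unfolding x'_def by (rule ext) (simp add: algebra_simps)
      have "integral {0..1} (\<lambda>s. d * A s + lam * (A s * w s))
          = integral {0..1} (\<lambda>s. d * A s) + integral {0..1} (\<lambda>s. lam * (A s * w s))"
        by (rule Henstock_Kurzweil_Integration.integral_add)
           (use integrable_cmul[OF Aint, of d] integrable_cmul[OF wint, of lam] in auto)
      moreover have "integral {0..1} (\<lambda>s. d * A s) = d * B.a"
        unfolding B.a_def by (rule integral_mult[OF Aint, symmetric])
      moreover have "integral {0..1} (\<lambda>s. lam * (A s * w s)) = lam * B.LA w"
        unfolding B.LA_def by (rule integral_mult[OF wint, symmetric])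
      ultimately show ?thesis unfolding fe by linarith
    qed
    have LBx: "integral {0..1} (\<lambda>s. B s * x' s) = d * B.b + lam * B.LB w"
    proof -
      have fe: "(\<lambda>s. B s * x' s) = (\<lambda>s. d * B s + lam * (B s * w s))"
        unfolding x'_def by (rule ext) (simp add: algebra_simps)
      have "integral {0..1} (\<lambda>s. d * B s + lam * (B s * w s))
          = integral {0..1} (\<lambda>s. d * B s) + integral {0..1} (\<lambda>s. lam * (B s * w s))"
        by (rule Henstock_Kurzweil_Integration.integral_add)
           (use integrable_cmul[OF Bint, of d] integrable_cmul[OF wintB, of lam] in auto)
      moreover have "integral {0..1} (\<lambda>s. d * B s) = d * B.b"
        unfolding B.b_def by (rule integral_mult[OF Bint, symmetric])
      moreover have "integral {0..1} (\<lambda>s. lam * (B s * w s)) = lam * B.LB w"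
        unfolding B.LB_def by (rule integral_mult[OF wintB, symmetric])
      ultimately show ?thesis unfolding fe by linarith
    qed
    have e1: "c = B.a * d + lam * B.LA w" using eq1 unfolding w_eta .
    have e2: "d * B.D = lam * (B.LB w - B.LA w - B.WI w)" using eq2 unfolding w_eta .
    have e1': "c = d * B.a + lam * B.LA w" using e1 by (simp only: mult.commute)
    have e2': "d + d * B.a - d * B.b = lam * B.LB w - lam * B.LA w - lam * B.WI w"
      using e2 unfolding B.D_def by (simp only: right_diff_distrib distrib_left mult_1_right)
    have valA: "integral {0..1} (\<lambda>s. A s * x' s) = X 0" using LAx X0 e1' by linarith
    have valB: "integral {0..1} (\<lambda>s. B s * x' s) = X 1" using LBx X1 e1' e2' by linarith
    have RA: "has_RS_integral A X 0 1 (X 0)"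
      using RS_main[OF bA Aint oA dX x'c] unfolding valA .
    have RB: "has_RS_integral B X 0 1 (X 1)"
      using RS_main[OF bB Bint oB dX x'c] unfolding valB .
    show "\<exists>x. is_solution f lam A B x"
      unfolding is_solution_def
      by (intro exI[of _ X] conjI exI[of _ x'] exI[of _ x''] ballI dX dx' x''c x''eq RA RB)
  qed
qed


end
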